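(* Let $\mathbb{X}$ be a Euclidean space, $f:\mathbb{X}\to\mathbb{R}$ and $G:\mathbb{X}\to\mathbb{S}^n$ twice continuously differentiable, and consider $\min_x f(x)+\delta_{\mathbb{S}^n_+}(G(x))$. Let $\bar x$ be a stationary point and $\overline{Y}\in\mathcal{M}(\bar x)$. Let $A=G(\bar x)+\overline{Y}$ have eigenvalue decomposition $A=P\Lambda(A)P^T$ with $P=[P_\alpha\ P_\beta\ P_\gamma]$ orthogonal, where $\alpha,\beta,\gamma$ are the index sets of positive, zero and negative eigenvalues of $A$. Then there exists $q\in{\rm quad}\,\delta_{\mathbb{S}^n_+}(G(\bar x)\mid\overline{Y})$ such that for all $H\in\mathbb{S}^n$, $$q(H)=-\tfrac12\varUpsilon_{G(\bar x)}(\overline{Y},H)+\delta_{{\rm aff}\,\mathcal{C}_{\mathbb{S}^n_+}(G(\bar x),\overline{Y})}(H)=\sum_{i\in\alpha,\,j\in\gamma}\frac{-\lambda_j(A)}{\lambda_i(A)}(\widetilde H_{ij})^2+\delta_{{\rm aff}\,\mathcal{C}_{\mathbb{S}^n_+}(G(\bar x),\overline{Y})}(H),$$ where $\widetilde H=P^THP$.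
   Context: $\mathbb{S}^n$ is the space of real symmetric $n\times n$ matrices with the Frobenius inner product, $\mathbb{S}^n_+$ ($\mathbb{S}^n_-$) the cone of positive (negative) semidefinite matrices, $\delta_C$ the indicator function of a set $C$ (0 on $C$, $+\infty$ off $C$). $L(x,Y)=f(x)+\langle Y,G(x)\rangle$. $\mathcal{M}(\bar x)=\{Y\in\mathbb{S}^n\mid L_x'(\bar x,Y)=0,\ G(\bar x)\in\mathbb{S}^n_+,\ Y\in\mathbb{S}^n_-,\ \langle G(\bar x),Y\rangle=0\}$, and $\bar x$ is stationary if this set is nonempty. $\lambda_1(A)\ge\dots\ge\lambda_n(A)$ are the eigenvalues of $A$. The affine hull of the critical cone is ${\rm aff}\,\mathcal{C}_{\mathbb{S}^n_+}(G(\bar x),\overline{Y})=\{H\in\mathbb{S}^n\mid P_\beta^THP_\gamma=0,\ P_\gamma^THP_\gamma=0\}$. The $\sigma$-term is $\varUpsilon_{G(\bar x)}(\overline{Y},H)=2\langle\overline{Y},HG(\bar x)^{\dagger}H\rangle$, with $G(\bar x)^\dagger$ the Moore–Penrose pseudo-inverse. Second subderivative: for $g:\mathbb{Y}\to(-\infty,\infty]$ finite at $\bar z$ and $v\in\mathbb{Y}$, $\Delta_t^2g(\bar z\mid v)(u)=\frac{g(\bar z+tu)-g(\bar z)-t\langle v,u\rangle}{t^2/2}$ and $d^2g(\bar z\mid v)(w)=\liminf_{t\downarrow0,u\to w}\Delta_t^2g(\bar z\mid v)(u)$; $g$ is twice epi-differentiable at $\bar z$ for $v$ if $\Delta_t^2g(\bar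 z\mid v)$ epi-converges to $d^2g(\bar z\mid v)$ as $t\downarrow0$. A set-valued map $\mathcal{R}$ is generalized linear if its graph is a linear subspace. A function $q$ is a generalized quadratic form if $q(0)=0$ and $\partial q$ is generalized linear. $g$ is generalized twice differentiable at $z$ for $v$ if it is twice epi-differentiable there and $d^2g(z\mid v)$ is a generalized quadratic form. The quadratic bundle ${\rm quad}\,g(\bar z\mid\bar v)$ is the set of generalized quadratic forms $q$ for which there exist $(z^k,v^k)\to(\bar z,\bar v)$ with $g$ generalized twice differentiable at $z^k$ for $v^k$ and $\frac12 d^2g(z^k\mid v^k)$ epi-converging to $q$. *)

theory Defs
  imports "HOL-Analysis.Analysis" "HOL-Library.Liminf_Limsup"
begin

text \<open>Symmetric matrices; the Frobenius inner product on real^'n^'n is the library inner product.\<close>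
definition sym_mats :: "(real^'n^'n) set" where
  "sym_mats = {A. transpose A = A}"

definition psd_cone :: "(real^'n^'n) set" where
  "psd_cone = {A. transpose A = A \<and> (\<forall>x. 0 \<le> x \<bullet> (A *v x))}"

definition nsd_cone :: "(real^'n^'n) set" where
  "nsd_cone = {A. transpose A = A \<and> (\<forall>x. x \<bullet> (A *v x) \<le> 0)}"

definition diag_mat :: "('n::finite \<Rightarrow> real) \<Rightarrow> real^'n^'n" where
  "diag_mat d = (\<chi> i j. if i = j then d i else 0)"

definition pinv :: "real^'n^'n \<Rightarrow> real^'n^'n" where
  "pinv M = (THE X. M ** X ** M = M \<and> X ** M ** X = X \<and>
                    transpose (M ** X) = M ** X \<and> transpose (X ** M) = X ** M)"

definition sigma_term :: "real^'n^'n \<Rightarrow> real^'n^'n \<Rightarrow> real^'n^'n \<Rightarrow> real" where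
  "sigma_term X Y H = 2 * (Y \<bullet> (H ** pinv X ** H))"

definition indicator_fun :: "'a set \<Rightarrow> 'a \<Rightarrow> ereal" where
  "indicator_fun C x = (if x \<in> C then 0 else \<infinity>)"

text \<open>All variational notions are taken relative to an ambient Euclidean space given as a
  linear subspace V of a real inner product space (here V = S^n).\<close>

definition epi_conv_seq :: "'b::real_normed_vector set \<Rightarrow> (nat \<Rightarrow> 'b \<Rightarrow> ereal) \<Rightarrow> ('b \<Rightarrow> ereal) \<Rightarrow> bool" where
  "epi_conv_seq V F f \<longleftrightarrow>
     (\<forall>x\<in>V. (\<forall>xs. (\<forall>k. xs k \<in> V) \<and> xs \<longlonglongrightarrow> x \<longrightarrow> f x \<le> liminf (\<lambda>k. F k (xs k))) \<and>
            (\<exists>xs. (\<forall>k. xs k \<in> V) \<and> xs \<longlonglongrightarrow> x \<and> limsup (\<lambda>k. F k (xs k)) \<le> f x))"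

definition epi_conv_at0 :: "'b::real_normed_vector set \<Rightarrow> (real \<Rightarrow> 'b \<Rightarrow> ereal) \<Rightarrow> ('b \<Rightarrow> ereal) \<Rightarrow> bool" where
  "epi_conv_at0 V F f \<longleftrightarrow>
     (\<forall>ts. (\<forall>k. 0 < ts k) \<and> ts \<longlonglongrightarrow> 0 \<longrightarrow> epi_conv_seq V (\<lambda>k. F (ts k)) f)"

definition second_diff_quot :: "('b::real_inner \<Rightarrow> ereal) \<Rightarrow> 'b \<Rightarrow> 'b \<Rightarrow> real \<Rightarrow> 'b \<Rightarrow> ereal" where
  "second_diff_quot g z v t u = (g (z + t *\<^sub>R u) - g z - ereal (t * (v \<bullet> u))) / ereal (t\<^sup>2 / 2)"

definition second_subderiv :: "'b::real_inner set \<Rightarrow> ('b \<Rightarrow> ereal) \<Rightarrow> 'b \<Rightarrow> 'b \<Rightarrow> 'b \<Rightarrow> ereal" where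
  "second_subderiv V g z v w =
     Liminf (at_right 0 \<times>\<^sub>F inf (nhds w) (principal V)) (\<lambda>(t, u). second_diff_quot g z v t u)"

definition twice_epi_diff :: "'b::real_inner set \<Rightarrow> ('b \<Rightarrow> ereal) \<Rightarrow> 'b \<Rightarrow> 'b \<Rightarrow> bool" where
  "twice_epi_diff V g z v \<longleftrightarrow> z \<in> V \<and> v \<in> V \<and> \<bar>g z\<bar> \<noteq> \<infinity> \<and>
     epi_conv_at0 V (second_diff_quot g z v) (second_subderiv V g z v)"

definition reg_subgrad :: "'b::real_inner set \<Rightarrow> ('b \<Rightarrow> ereal) \<Rightarrow> 'b \<Rightarrow> 'b \<Rightarrow> bool" where
  "reg_subgrad V q x v \<longleftrightarrow> x \<in> V \<and> v \<in> V \<and> \<bar>q x\<bar> \<noteq> \<infinity> \<and>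
     0 \<le> Liminf (at x within V) (\<lambda>y. (q y - q x - ereal (v \<bullet> (y - x))) / ereal (norm (y - x)))"

definition subdiff :: "'b::real_inner set \<Rightarrow> ('b \<Rightarrow> ereal) \<Rightarrow> 'b \<Rightarrow> 'b set" where
  "subdiff V q x = {v. x \<in> V \<and> \<bar>q x\<bar> \<noteq> \<infinity> \<and>
     (\<exists>xs vs. (\<forall>k. reg_subgrad V q (xs k) (vs k)) \<and> xs \<longlonglongrightarrow> x \<and>
              (\<lambda>k. q (xs k)) \<longlonglongrightarrow> q x \<and> vs \<longlonglongrightarrow> v)}"

definition generalized_linear :: "('b::real_vector \<Rightarrow> 'b set) \<Rightarrow> bool" where
  "generalized_linear R \<longleftrightarrow> subspace {(x, v). v \<in> R x}"

definition gen_quad_form :: "'b::real_inner set \<Rightarrow> ('b \<Rightarrow> ereal) \<Rightarrow> bool" where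
  "gen_quad_form V q \<longleftrightarrow> q 0 = 0 \<and> generalized_linear (subdiff V q)"

definition gen_twice_diff :: "'b::real_inner set \<Rightarrow> ('b \<Rightarrow> ereal) \<Rightarrow> 'b \<Rightarrow> 'b \<Rightarrow> bool" where
  "gen_twice_diff V g z v \<longleftrightarrow> twice_epi_diff V g z v \<and> gen_quad_form V (second_subderiv V g z v)"

definition quad_bundle :: "'b::real_inner set \<Rightarrow> ('b \<Rightarrow> ereal) \<Rightarrow> 'b \<Rightarrow> 'b \<Rightarrow> ('b \<Rightarrow> ereal) set" where
  "quad_bundle V g zb vb = {q. gen_quad_form V q \<and>
     (\<exists>zs vs. zs \<longlonglongrightarrow> zb \<and> vs \<longlonglongrightarrow> vb \<and> (\<forall>k. gen_twice_diff V g (zs k) (vs k)) \<and>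
        epi_conv_seq V (\<lambda>k w. ereal (1/2) * second_subderiv V g (zs k) (vs k) w) q)}"

definition C2 :: "('a::real_normed_vector \<Rightarrow> 'b::real_normed_vector) \<Rightarrow> bool" where
  "C2 f \<longleftrightarrow> (\<exists>f' f''. (\<forall>x. (f has_derivative blinfun_apply (f' x)) (at x)) \<and>
                     (\<forall>x. (f' has_derivative blinfun_apply (f'' x)) (at x)) \<and>
                     continuous_on UNIV f'')"

definition multipliers :: "('a::euclidean_space \<Rightarrow> real) \<Rightarrow> ('a \<Rightarrow> real^'n^'n) \<Rightarrow> 'a \<Rightarrow> (real^'n^'n) set" where
  "multipliers f G xb = {Y. transpose Y = Y \<and>
      ((\<lambda>x. f x + Y \<bullet> G x) has_derivative (\<lambda>h. 0)) (at xb) \<and>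
      G xb \<in> psd_cone \<and> Y \<in> nsd_cone \<and> G xb \<bullet> Y = 0}"

definition stationary :: "('a::euclidean_space \<Rightarrow> real) \<Rightarrow> ('a \<Rightarrow> real^'n^'n) \<Rightarrow> 'a \<Rightarrow> bool" where
  "stationary f G xb \<longleftrightarrow> multipliers f G xb \<noteq> {}"

text \<open>Affine hull of the critical cone, given via the eigenvector blocks:
  P_beta^T H P_gamma = 0 and P_gamma^T H P_gamma = 0.\<close>
definition aff_crit_cone :: "real^'n^'n \<Rightarrow> ('n \<Rightarrow> real) \<Rightarrow> (real^'n^'n) set" where
  "aff_crit_cone P lam = {H \<in> sym_mats. \<forall>i j. lam j < 0 \<longrightarrow> lam i \<le> 0 \<longrightarrow>
       (transpose P ** H ** P) $ i $ j = 0}"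

end

theory Submission
  imports Defs
begin

definition tlm :: "real^'n^'n \<Rightarrow> real^'n^'n \<Rightarrow> real^'n^'n" where
  "tlm P H = transpose P ** H ** P"

lemma orthD: assumes "orthogonal_matrix (P::real^'n^'n)"
  shows "transpose P ** P = mat 1" "P ** transpose P = mat 1"
  using assms unfolding orthogonal_matrix_def by auto

lemma tl_back: assumes "orthogonal_matrix P" shows "P ** tlm P H ** transpose P = H"
proof -
  have "P ** tlm P H ** transpose P = (P ** transpose P) ** H ** (P ** transpose P)"
    by (simp add: tlm_def matrix_mul_assoc)
  thus ?thesis using orthD[OF assms] by simp
qed

lemma tl_conj: assumes "orthogonal_matrix P" shows "tlm P (P ** D ** transpose P) = D"
proof -
  have "tlm P (P ** D ** transpose P) = (transpose P ** P) ** D ** (transpose P ** P)"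
    by (simp add: tlm_def matrix_mul_assoc)
  thus ?thesis using orthD[OF assms] by simp
qed

lemma tl_entry: "tlm P H $ i $ j = (\<Sum>a\<in>UNIV. \<Sum>b\<in>UNIV. P$a$i * H$a$b * P$b$j)"
proof -
  have "tlm P H $ i $ j = (\<Sum>b\<in>UNIV. (\<Sum>a\<in>UNIV. P$a$i * H$a$b) * P$b$j)"
    by (simp add: tlm_def matrix_matrix_mult_def transpose_def)
  also have "\<dots> = (\<Sum>b\<in>UNIV. \<Sum>a\<in>UNIV. P$a$i * H$a$b * P$b$j)"
    by (simp add: sum_distrib_right)
  also have "\<dots> = (\<Sum>a\<in>UNIV. \<Sum>b\<in>UNIV. P$a$i * H$a$b * P$b$j)"
    by (rule sum.swap)
  finally show ?thesis .
qed

lemma tl_add: "tlm P (H + K) = tlm P H + tlm P K"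
  by (simp add: vec_eq_iff tl_entry algebra_simps sum.distrib)

lemma tl_scale: "tlm P (c *\<^sub>R H) = c *\<^sub>R tlm P H"
  by (simp add: tlm_def matrix_scalar_ac scalar_matrix_assoc)

lemma tl_diff: "tlm P (H - K) = tlm P H - tlm P K"
  by (simp add: vec_eq_iff tl_entry algebra_simps sum_subtractf)

lemma tl_zero: "tlm P (0::real^'n^'n) = 0"
  by (simp add: tlm_def)

lemma tl_transpose: "transpose (tlm P H) = tlm P (transpose H)"
  by (simp add: tlm_def matrix_transpose_mul matrix_mul_assoc)

lemma tl_sym: assumes "H \<in> sym_mats" shows "tlm P H $ i $ j = tlm P H $ j $ i"
proof -
  have "transpose (tlm P H) = tlm P H" using assms tl_transpose[of P H] by (simp add: sym_mats_def)
  then have "transpose (tlm P H) $ j $ i = tlm P H $ j $ i" by simp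
  thus ?thesis by (simp add: transpose_def)
qed

lemma inner_trace: "(A::real^'n^'n) \<bullet> B = trace (transpose A ** B)"
proof -
  have "A \<bullet> B = (\<Sum>i\<in>UNIV. \<Sum>k\<in>UNIV. A$i$k * B$i$k)"
    by (simp add: inner_vec_def)
  also have "\<dots> = (\<Sum>k\<in>UNIV. \<Sum>i\<in>UNIV. A$i$k * B$i$k)"
    by (rule sum.swap)
  also have "\<dots> = trace (transpose A ** B)"
    by (simp add: trace_def matrix_matrix_mult_def transpose_def)
  finally show ?thesis .
qed

lemma tl_inner: assumes "orthogonal_matrix P" shows "tlm P A \<bullet> tlm P B = A \<bullet> B"
proof -
  have "transpose (tlm P A) ** tlm P B = transpose P ** (transpose A ** (P ** transpose P) ** B) ** P"
    by (simp add: tlm_def matrix_transpose_mul matrix_mul_assoc)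
  also have "\<dots> = transpose P ** (transpose A ** B ** P)"
    using orthD[OF assms] by (simp add: matrix_mul_assoc)
  finally have "trace (transpose (tlm P A) ** tlm P B) = trace ((transpose A ** B ** P) ** transpose P)"
    using trace_mul_sym by metis
  also have "\<dots> = trace (transpose A ** B)"
    using orthD[OF assms] by (simp add: matrix_mul_assoc[symmetric])
  finally show ?thesis by (simp add: inner_trace)
qed

lemma quad_tl: "(P *v y) \<bullet> (M *v (P *v y)) = y \<bullet> (tlm P M *v y)"
proof -
  have "(P *v y) \<bullet> (M *v (P *v y)) = (y v* transpose P) \<bullet> (M *v (P *v y))" by simp
  also have "\<dots> = y \<bullet> (transpose P *v (M *v (P *v y)))" by (rule dot_lmul_matrix)
  also have "\<dots> = y \<bullet> (tlm P M *v y)" by (simp add: tlm_def matrix_vector_mul_assoc matrix_mul_assoc)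
  finally show ?thesis .
qed

lemma psd_tl: assumes "M \<in> psd_cone" shows "0 \<le> y \<bullet> (tlm P M *v y)"
proof -
  have "0 \<le> (P *v y) \<bullet> (M *v (P *v y))" using assms unfolding psd_cone_def by blast
  thus ?thesis by (simp only: quad_tl)
qed

lemma tl_continuous: assumes "(X \<longlongrightarrow> H) F" shows "((\<lambda>x. tlm P (X x) $ i $ j) \<longlongrightarrow> tlm P H $ i $ j) F"
  unfolding tl_entry by (intro tendsto_intros assms)

lemma quad_form_expand: "y \<bullet> (M *v y) = (\<Sum>a\<in>UNIV. \<Sum>b\<in>UNIV. y$a * M$a$b * y$b)"
  by (simp add: inner_vec_def matrix_vector_mult_def sum_distrib_left mult_ac)

lemma seq_to_F:
  fixes xs :: "nat \<Rightarrow> 'b::real_normed_vector"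
  assumes "\<forall>k. 0 < ts k" "ts \<longlonglongrightarrow> 0" "\<forall>k. xs k \<in> V" "xs \<longlonglongrightarrow> x"
  shows "filterlim (\<lambda>k. (ts k, xs k)) (at_right (0::real) \<times>\<^sub>F inf (nhds x) (principal V)) sequentially"
proof (rule filterlim_Pair)
  show "filterlim ts (at_right 0) sequentially"
  proof -
    have "\<forall>k. ts k \<in> {0<..} \<and> ts k \<noteq> 0"
    proof
      fix k have "0 < ts k" using assms(1) by blast
      thus "ts k \<in> {0<..} \<and> ts k \<noteq> 0" by simp
    qed
    hence "eventually (\<lambda>k. ts k \<in> {0<..} \<and> ts k \<noteq> 0) sequentially" by (rule always_eventually)
    thus ?thesis unfolding filterlim_at using assms(2) by blast
  qed
  show "filterlim xs (inf (nhds x) (principal V)) sequentially"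
    unfolding filterlim_inf filterlim_principal using assms by auto
qed

lemma epi_abstract:
  fixes g :: "'b::real_inner \<Rightarrow> ereal" and d :: "'b \<Rightarrow> ereal"
  assumes V: "subspace V" and zV: "z \<in> V" and vV: "v \<in> V" and gz: "\<bar>g z\<bar> \<noteq> \<infinity>"
  and LB: "\<And>W y. W \<in> V \<Longrightarrow> y < d W \<Longrightarrow>
     eventually (\<lambda>p. y < case_prod (second_diff_quot g z v) p) (at_right 0 \<times>\<^sub>F inf (nhds W) (principal V))"
  and REC: "\<And>W. W \<in> V \<Longrightarrow> d W \<noteq> \<infinity> \<Longrightarrow> \<exists>K\<in>V. \<forall>t>0. second_diff_quot g z v t (W + t *\<^sub>R K) \<le> d W"
  shows "\<forall>W\<in>V. second_subderiv V g z v W = d W" "twice_epi_diff V g z v"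
proof -
  define f where "f = case_prod (second_diff_quot g z v)"
  have ss: "second_subderiv V g z v W = Liminf (at_right 0 \<times>\<^sub>F inf (nhds W) (principal V)) f" for W
    by (simp add: second_subderiv_def f_def)
  have ge: "d W \<le> second_subderiv V g z v W" if "W \<in> V" for W
    unfolding ss le_Liminf_iff using LB[OF that] f_def by blast
  have le: "second_subderiv V g z v W \<le> d W" if W: "W \<in> V" for W
  proof (cases "d W = \<infinity>")
    case True thus ?thesis by simp
  next
    case False
    then obtain K where K: "K \<in> V" "\<forall>t>0. second_diff_quot g z v t (W + t *\<^sub>R K) \<le> d W"
      using REC[OF W] by blast
    define ts where "ts = (\<lambda>k::nat. inverse (real (Suc k)))"
    have tpos: "\<forall>k. 0 < ts k" by (simp add: ts_def)
    have tlim: "ts \<longlonglongrightarrow> 0" unfolding ts_def by (rule LIMSEQ_inverse_real_of_nat)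
    have xin: "\<forall>k. W + ts k *\<^sub>R K \<in> V" using V W K(1) by (simp add: subspace_add subspace_scale)
    have xlim: "(\<lambda>k. W + ts k *\<^sub>R K) \<longlonglongrightarrow> W"
      using tendsto_add[OF tendsto_const tendsto_scaleR[OF tlim tendsto_const], of W K] by simp
    have FL: "filterlim (\<lambda>k. (ts k, W + ts k *\<^sub>R K)) (at_right 0 \<times>\<^sub>F inf (nhds W) (principal V)) sequentially"
      by (rule seq_to_F[OF tpos tlim xin xlim])
    show ?thesis
    proof (rule ccontr)
      assume "\<not> ?thesis"
      hence "d W < second_subderiv V g z v W" by simp
      then obtain y where y: "d W < y" "y < second_subderiv V g z v W" using dense by blast
      have "eventually (\<lambda>p. y < f p) (at_right 0 \<times>\<^sub>F inf (nhds W) (principal V))"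
        using y(2) le_Liminf_iff[THEN iffD1, OF order_refl] unfolding ss by blast
      hence ev: "eventually (\<lambda>k. y < f (ts k, W + ts k *\<^sub>R K)) sequentially"
        using FL unfolding filterlim_iff by blast
      have bnd: "\<forall>k. f (ts k, W + ts k *\<^sub>R K) \<le> d W" using K(2) tpos by (simp add: f_def)
      have "eventually (\<lambda>k. False) sequentially"
        using ev by (rule eventually_mono) (use bnd y(1) in \<open>metis less_le_trans less_asym\<close>)
      thus False by simp
    qed
  qed
  show eq: "\<forall>W\<in>V. second_subderiv V g z v W = d W" using ge le by (meson order_antisym)
  show "twice_epi_diff V g z v"
    unfolding twice_epi_diff_def epi_conv_at0_def epi_conv_seq_def
  proof (intro conjI allI impI ballI zV vV gz)
    fix ts :: "nat \<Rightarrow> real" and x xs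
    assume ts: "(\<forall>k. 0 < ts k) \<and> ts \<longlonglongrightarrow> 0" and x: "x \<in> V"
      and xs: "(\<forall>k. xs k \<in> V) \<and> xs \<longlonglongrightarrow> x"
      have FL: "filterlim (\<lambda>k. (ts k, xs k)) (at_right 0 \<times>\<^sub>F inf (nhds x) (principal V)) sequentially"
        using seq_to_F ts xs by blast
      show "second_subderiv V g z v x \<le> liminf (\<lambda>k. second_diff_quot g z v (ts k) (xs k))"
        unfolding le_Liminf_iff
      proof (intro allI impI)
        fix y assume "y < second_subderiv V g z v x"
        hence "y < d x" using eq x by simp
        hence "eventually (\<lambda>p. y < case_prod (second_diff_quot g z v) p) (at_right 0 \<times>\<^sub>F inf (nhds x) (principal V))"
          using LB x by blast
        hence "eventually (\<lambda>k. y < case_prod (second_diff_quot g z v) (ts k, xs k)) sequentially"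
          using FL unfolding filterlim_iff by blast
        thus "eventually (\<lambda>k. y < second_diff_quot g z v (ts k) (xs k)) sequentially" by simp
      qed
  next
    fix ts :: "nat \<Rightarrow> real" and x
    assume ts: "(\<forall>k. 0 < ts k) \<and> ts \<longlonglongrightarrow> 0" and x: "x \<in> V"
    show "\<exists>xs. (\<forall>k. xs k \<in> V) \<and> xs \<longlonglongrightarrow> x \<and>
           limsup (\<lambda>k. second_diff_quot g z v (ts k) (xs k)) \<le> second_subderiv V g z v x"
    proof (cases "d x = \<infinity>")
      case True
      hence "second_subderiv V g z v x = \<infinity>" using eq x by simp
      thus ?thesis using x by (intro exI[of _ "\<lambda>k. x"]) simp
    next
      case False
      then obtain K where K: "K \<in> V" "\<forall>t>0. second_diff_quot g z v t (x + t *\<^sub>R K) \<le> d x"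
        using REC[OF x] by blast
      have xin: "\<forall>k. x + ts k *\<^sub>R K \<in> V" using V x K(1) by (simp add: subspace_add subspace_scale)
      have xlim: "(\<lambda>k. x + ts k *\<^sub>R K) \<longlonglongrightarrow> x"
        using tendsto_add[OF tendsto_const tendsto_scaleR[OF conjunct2[OF ts] tendsto_const], of x K] by simp
      have "limsup (\<lambda>k. second_diff_quot g z v (ts k) (x + ts k *\<^sub>R K)) \<le> d x"
        using K(2) ts by (intro Limsup_bounded always_eventually) auto
      thus ?thesis using xin xlim eq x by (intro exI[of _ "\<lambda>k. x + ts k *\<^sub>R K"]) auto
    qed
  qed
qed

lemma sym_iff: "H \<in> sym_mats \<longleftrightarrow> (\<forall>i j. H$i$j = H$j$i)"
  unfolding sym_mats_def by (auto simp: vec_eq_iff transpose_def)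

lemma subspace_sym: "subspace (sym_mats :: (real^'n^'n) set)"
  unfolding subspace_def by (auto simp: sym_iff)

definition Lset :: "real^'n^'n \<Rightarrow> ('n \<Rightarrow> 'n \<Rightarrow> bool) \<Rightarrow> (real^'n^'n) set" where
  "Lset P Zs = {H \<in> sym_mats. \<forall>i j. Zs i j \<longrightarrow> tlm P H $ i $ j = 0}"

definition Qf :: "real^'n^'n \<Rightarrow> ('n \<Rightarrow> 'n \<Rightarrow> real) \<Rightarrow> real^'n^'n \<Rightarrow> real" where
  "Qf P c H = (\<Sum>i\<in>UNIV. \<Sum>j\<in>UNIV. c i j * (tlm P H $ i $ j)\<^sup>2)"

definition Bf :: "real^'n^'n \<Rightarrow> ('n \<Rightarrow> 'n \<Rightarrow> real) \<Rightarrow> real^'n^'n \<Rightarrow> real^'n^'n \<Rightarrow> real" where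
  "Bf P c H K = (\<Sum>i\<in>UNIV. \<Sum>j\<in>UNIV. c i j * (tlm P H $ i $ j) * (tlm P K $ i $ j))"

lemma subspace_Lset: "subspace (Lset P Zs)"
  unfolding subspace_def Lset_def sym_iff by (auto simp: tl_add tl_scale tl_zero)

lemma Lset_sub: "Lset P Zs \<subseteq> sym_mats" unfolding Lset_def by auto

lemma Qf_add: "Qf P c (x + h) = Qf P c x + 2 * Bf P c x h + Qf P c h"
  unfolding Qf_def Bf_def tl_add
  by (simp add: power2_eq_square algebra_simps sum.distrib sum_distrib_left)

lemma Qf_zero: "Qf P c (0::real^'n^'n) = 0"
  unfolding Qf_def by (simp add: tl_zero)

lemma Qf_scale: "Qf P c (s *\<^sub>R h) = s\<^sup>2 * Qf P c h"
  unfolding Qf_def tl_scale by (simp add: power2_eq_square algebra_simps sum_distrib_left)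

lemma Qf_nonneg: "(\<And>i j. 0 \<le> c i j) \<Longrightarrow> 0 \<le> Qf P c H"
  unfolding Qf_def by (intro sum_nonneg mult_nonneg_nonneg) auto

lemma Bf_add: "Bf P c (x + y) h = Bf P c x h + Bf P c y h"
  unfolding Bf_def tl_add by (simp add: algebra_simps sum.distrib)

lemma Bf_scale: "Bf P c (s *\<^sub>R x) h = s * Bf P c x h"
  unfolding Bf_def tl_scale by (simp add: algebra_simps sum_distrib_left)

lemma Bf_scale2: "Bf P c x (s *\<^sub>R h) = s * Bf P c x h"
  unfolding Bf_def tl_scale by (simp add: algebra_simps sum_distrib_left)

lemma Bf_zero: "Bf P c 0 h = 0"
  unfolding Bf_def by (simp add: tl_zero)

lemma Bf_cont: "(X \<longlongrightarrow> x) F \<Longrightarrow> ((\<lambda>k. Bf P c (X k) h) \<longlongrightarrow> Bf P c x h) F"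
  unfolding Bf_def by (intro tendsto_intros tl_continuous)

lemma Qf_cont: "(X \<longlongrightarrow> x) F \<Longrightarrow> ((\<lambda>k. Qf P c (X k)) \<longlongrightarrow> Qf P c x) F"
  unfolding Qf_def by (intro tendsto_intros tl_continuous)

lemma phi_eval:
  assumes "norm (y - x) > 0"
  shows "(ereal a - ereal b - ereal c) / ereal (norm (y - x)) = ereal ((a - b - c) / norm (y - x))"
  using assms by simp

lemma reg_char:
  fixes P :: "real^'n^'n"
  assumes c: "\<And>i j. 0 \<le> c i j"
    and q: "\<And>H. H \<in> sym_mats \<Longrightarrow> q H = (if H \<in> Lset P Zs then ereal (Qf P c H) else \<infinity>)"
  shows "reg_subgrad sym_mats q x v \<longleftrightarrow>
         x \<in> Lset P Zs \<and> v \<in> sym_mats \<and> (\<forall>h\<in>Lset P Zs. v \<bullet> h = 2 * Bf P c x h)"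
proof
  let ?L = "Lset P Zs" and ?V = "sym_mats :: (real^'n^'n) set"
  let ?phi = "\<lambda>y. (q y - q x - ereal (v \<bullet> (y - x))) / ereal (norm (y - x))"
  assume R: "reg_subgrad ?V q x v"
  hence xV: "x \<in> ?V" and vV: "v \<in> ?V" and fin: "\<bar>q x\<bar> \<noteq> \<infinity>"
    and lim: "0 \<le> Liminf (at x within ?V) ?phi" unfolding reg_subgrad_def by auto
  have xL: "x \<in> ?L" using fin q[OF xV] by (cases "x \<in> ?L") auto
  have claim: "v \<bullet> h \<le> 2 * Bf P c x h" if hL: "h \<in> ?L" for h
  proof (rule ccontr)
    assume "\<not> ?thesis"
    hence a: "v \<bullet> h - 2 * Bf P c x h > 0" by simp
    define a where "a = v \<bullet> h - 2 * Bf P c x h"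
    have apos: "a > 0" using a a_def by simp
    have h0: "h \<noteq> 0" using apos by (auto simp: a_def Bf_scale2[of P c x 0 0, simplified])
    hence nh: "norm h > 0" by simp
    have "eventually (\<lambda>y. ereal (- a / (2 * norm h)) < ?phi y) (at x within ?V)"
    proof -
      have "ereal (- a / (2 * norm h)) < 0" using apos nh by (simp add: divide_neg_pos)
      thus ?thesis using le_Liminf_iff[THEN iffD1, OF lim] by blast
    qed
    moreover have "filterlim (\<lambda>s. x + s *\<^sub>R h) (at x within ?V) (at_right 0)"
      unfolding filterlim_at
    proof
      have mem: "x + s *\<^sub>R h \<in> ?V \<and> x + s *\<^sub>R h \<noteq> x" if "s > 0" for s :: real
      proof -
        have "h \<in> ?V" using hL Lset_sub by blast
        hence "x + s *\<^sub>R h \<in> ?V" by (rule subspace_add[OF subspace_sym xV subspace_scale[OF subspace_sym]])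
        thus ?thesis using that h0 by simp
      qed
      thus "eventually (\<lambda>s. x + s *\<^sub>R h \<in> ?V \<and> x + s *\<^sub>R h \<noteq> x) (at_right 0)"
        by (rule eventually_mono[OF eventually_at_right_less[of "0::real"]]) (use mem in auto)
      show "((\<lambda>s. x + s *\<^sub>R h) \<longlongrightarrow> x) (at_right 0)"
      proof -
        have "((\<lambda>s::real. s) \<longlongrightarrow> 0) (at_right 0)" by (rule tendsto_ident_at)
        from tendsto_add[OF tendsto_const tendsto_scaleR[OF this tendsto_const], of x h]
        show ?thesis by simp
      qed
    qed
    ultimately have "eventually (\<lambda>s. ereal (- a / (2 * norm h)) < ?phi (x + s *\<^sub>R h)) (at_right 0)"
      unfolding filterlim_iff by blast
    then obtain b where b: "b > 0" "\<forall>s>0. s < b \<longrightarrow> ereal (- a / (2 * norm h)) < ?phi (x + s *\<^sub>R h)"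
      unfolding eventually_at_right_field by auto
    define s where "s = min (b / 2) (a / (2 * (Qf P c h + 1)))"
    have Qh: "Qf P c h \<ge> 0" using Qf_nonneg c by blast
    have spos: "s > 0" using b apos Qh by (simp add: s_def)
    have sb: "s < b" using b by (simp add: s_def)
    have sQ: "s * Qf P c h < a / 2"
    proof -
      have "s * Qf P c h \<le> a / (2 * (Qf P c h + 1)) * Qf P c h"
        using Qh by (intro mult_right_mono) (auto simp: s_def)
      also have "\<dots> < a / 2"
        using apos Qh by (simp add: field_simps)
      finally show ?thesis .
    qed
    have xsL: "x + s *\<^sub>R h \<in> ?L" by (rule subspace_add[OF subspace_Lset xL subspace_scale[OF subspace_Lset hL]])
    have xsV: "x + s *\<^sub>R h \<in> ?V" using xsL Lset_sub by blast
    have ns: "norm (x + s *\<^sub>R h - x) = s * norm h" using spos by simp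
    have Qexp: "Qf P c (x + s *\<^sub>R h) = Qf P c x + 2 * s * Bf P c x h + s\<^sup>2 * Qf P c h"
      by (simp add: Qf_add Bf_scale2 Qf_scale)
    have "?phi (x + s *\<^sub>R h) = ereal ((Qf P c (x + s *\<^sub>R h) - Qf P c x - v \<bullet> (s *\<^sub>R h)) / (s * norm h))"
      using q[OF xsV] q[OF xV] xsL xL ns spos nh by simp
    also have "\<dots> = ereal ((s * Qf P c h - a) / norm h)"
      using spos nh unfolding Qexp a_def by (simp add: field_simps power2_eq_square)
    finally have "?phi (x + s *\<^sub>R h) = ereal ((s * Qf P c h - a) / norm h)" .
    moreover have "(s * Qf P c h - a) / norm h < - a / (2 * norm h)"
      using sQ nh by (simp add: field_simps)
    ultimately have "?phi (x + s *\<^sub>R h) < ereal (- a / (2 * norm h))" by simp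
    moreover have "ereal (- a / (2 * norm h)) < ?phi (x + s *\<^sub>R h)" using b(2) spos sb by blast
    ultimately show False by simp
  qed
  have "\<forall>h\<in>?L. v \<bullet> h = 2 * Bf P c x h"
  proof
    fix h assume hL: "h \<in> ?L"
    have "- h \<in> ?L" by (rule subspace_neg[OF subspace_Lset hL])
    hence "v \<bullet> (- h) \<le> 2 * Bf P c x (- h)" by (rule claim)
    moreover have "Bf P c x (- h) = - Bf P c x h" using Bf_scale2[of P c x "-1" h] by simp
    ultimately show "v \<bullet> h = 2 * Bf P c x h" using claim[OF hL] by simp
  qed
  thus "x \<in> ?L \<and> v \<in> ?V \<and> (\<forall>h\<in>?L. v \<bullet> h = 2 * Bf P c x h)" using xL vV by blast
next
  let ?L = "Lset P Zs" and ?V = "sym_mats :: (real^'n^'n) set"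
  let ?phi = "\<lambda>y. (q y - q x - ereal (v \<bullet> (y - x))) / ereal (norm (y - x))"
  assume A: "x \<in> ?L \<and> v \<in> ?V \<and> (\<forall>h\<in>?L. v \<bullet> h = 2 * Bf P c x h)"
  hence xL: "x \<in> ?L" and vV: "v \<in> ?V" and G: "\<forall>h\<in>?L. v \<bullet> h = 2 * Bf P c x h" by auto
  have xV: "x \<in> ?V" using xL Lset_sub by blast
  have qx: "q x = ereal (Qf P c x)" using q[OF xV] xL by simp
  have pos: "0 \<le> ?phi y" if "y \<in> ?V" "y \<noteq> x" for y
  proof -
    have ny: "norm (y - x) > 0" using that by simp
    show ?thesis
    proof (cases "y \<in> ?L")
      case True
      have hL: "y - x \<in> ?L" by (rule subspace_diff[OF subspace_Lset True xL])
      have "Qf P c y = Qf P c x + 2 * Bf P c x (y - x) + Qf P c (y - x)"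
        using Qf_add[of P c x "y - x"] by simp
      hence "Qf P c y - Qf P c x - v \<bullet> (y - x) = Qf P c (y - x)" using G hL by simp
      moreover have "q y = ereal (Qf P c y)" using q[OF that(1)] True by simp
      ultimately have "?phi y = ereal (Qf P c (y - x) / norm (y - x))" using qx ny by simp
      moreover have "0 \<le> Qf P c (y - x)" by (rule Qf_nonneg) (rule c)
      ultimately show ?thesis using ny by simp
    next
      case False
      hence "q y = \<infinity>" using q[OF that(1)] by simp
      thus ?thesis using qx ny by simp
    qed
  qed
  have "0 \<le> Liminf (at x within ?V) ?phi"
  proof (rule Liminf_bounded)
    show "eventually (\<lambda>y. 0 \<le> ?phi y) (at x within ?V)"
      unfolding eventually_at_filter using pos by (intro always_eventually) auto
  qed
  thus "reg_subgrad ?V q x v" unfolding reg_subgrad_def using xV vV qx by simp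
qed

lemma subdiff_char:
  fixes P :: "real^'n^'n"
  assumes c: "\<And>i j. 0 \<le> c i j"
    and q: "\<And>H. H \<in> sym_mats \<Longrightarrow> q H = (if H \<in> Lset P Zs then ereal (Qf P c H) else \<infinity>)"
  shows "subdiff sym_mats q x =
         {v. x \<in> Lset P Zs \<and> v \<in> sym_mats \<and> (\<forall>h\<in>Lset P Zs. v \<bullet> h = 2 * Bf P c x h)}"
proof (intro set_eqI iffI)
  fix v assume "v \<in> subdiff sym_mats q x"
  then obtain xs vs where xV: "x \<in> sym_mats" and fin: "\<bar>q x\<bar> \<noteq> \<infinity>"
    and R: "\<forall>k. reg_subgrad sym_mats q (xs k) (vs k)" and xl: "xs \<longlonglongrightarrow> x" and vl: "vs \<longlonglongrightarrow> v"
    unfolding subdiff_def mem_Collect_eq by (elim conjE exE) (rule that, assumption+)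
  have xL: "x \<in> Lset P Zs" using fin q[OF xV] by (cases "x \<in> Lset P Zs") auto
  have Rk: "xs k \<in> Lset P Zs \<and> vs k \<in> sym_mats \<and> (\<forall>h\<in>Lset P Zs. vs k \<bullet> h = 2 * Bf P c (xs k) h)" for k
    using R reg_char[OF c q] by blast
  have vV: "v \<in> sym_mats"
    using closed_sequentially[OF closed_subspace[OF subspace_sym] _ vl] Rk by blast
  have "\<forall>h\<in>Lset P Zs. v \<bullet> h = 2 * Bf P c x h"
  proof
    fix h assume hL: "h \<in> Lset P Zs"
    have l1: "(\<lambda>k. vs k \<bullet> h) \<longlonglongrightarrow> v \<bullet> h" by (intro tendsto_intros vl)
    have l2: "(\<lambda>k. 2 * Bf P c (xs k) h) \<longlonglongrightarrow> 2 * Bf P c x h" by (intro tendsto_intros Bf_cont xl)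
    have "(\<lambda>k. vs k \<bullet> h) = (\<lambda>k. 2 * Bf P c (xs k) h)" using Rk hL by auto
    thus "v \<bullet> h = 2 * Bf P c x h" using l1 l2 LIMSEQ_unique by metis
  qed
  thus "v \<in> {v. x \<in> Lset P Zs \<and> v \<in> sym_mats \<and> (\<forall>h\<in>Lset P Zs. v \<bullet> h = 2 * Bf P c x h)}"
    using xL vV by blast
next
  fix v assume "v \<in> {v. x \<in> Lset P Zs \<and> v \<in> sym_mats \<and> (\<forall>h\<in>Lset P Zs. v \<bullet> h = 2 * Bf P c x h)}"
  hence A: "x \<in> Lset P Zs \<and> v \<in> sym_mats \<and> (\<forall>h\<in>Lset P Zs. v \<bullet> h = 2 * Bf P c x h)" by blast
  have xV: "x \<in> sym_mats" using A Lset_sub by blast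
  have qx: "q x = ereal (Qf P c x)" using q[OF xV] A by simp
  have R: "reg_subgrad sym_mats q x v" using reg_char[OF c q] A by blast
  have "\<exists>xs vs. (\<forall>k. reg_subgrad sym_mats q (xs k) (vs k)) \<and> xs \<longlonglongrightarrow> x \<and>
              (\<lambda>k. q (xs k)) \<longlonglongrightarrow> q x \<and> vs \<longlonglongrightarrow> v"
    by (rule exI[of _ "\<lambda>k::nat. x"], rule exI[of _ "\<lambda>k::nat. v"]) (simp add: R)
  thus "v \<in> subdiff sym_mats q x" unfolding subdiff_def using xV qx by simp
qed

lemma gq:
  fixes P :: "real^'n^'n"
  assumes c: "\<And>i j. 0 \<le> c i j"
    and q: "\<And>H. H \<in> sym_mats \<Longrightarrow> q H = (if H \<in> Lset P Zs then ereal (Qf P c H) else \<infinity>)"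
  shows "gen_quad_form sym_mats q"
proof -
  let ?L = "Lset P Zs" and ?V = "sym_mats :: (real^'n^'n) set"
  have e: "{(x, v). v \<in> subdiff ?V q x} = {(x, v). x \<in> ?L \<and> v \<in> ?V \<and> (\<forall>h\<in>?L. v \<bullet> h = 2 * Bf P c x h)}"
    using subdiff_char[OF c q] by blast
  have sub: "subspace {(x, v). x \<in> ?L \<and> v \<in> ?V \<and> (\<forall>h\<in>?L. v \<bullet> h = 2 * Bf P c x h)}"
    unfolding subspace_def
  proof (intro conjI ballI allI)
    show "0 \<in> {(x, v). x \<in> ?L \<and> v \<in> ?V \<and> (\<forall>h\<in>?L. v \<bullet> h = 2 * Bf P c x h)}"
      using subspace_0[OF subspace_Lset[of P Zs]] subspace_0[OF subspace_sym] by (simp add: zero_prod_def Bf_zero)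
  next
    fix r :: real and p assume p: "p \<in> {(x, v). x \<in> ?L \<and> v \<in> ?V \<and> (\<forall>h\<in>?L. v \<bullet> h = 2 * Bf P c x h)}"
    obtain x v where pxv: "p = (x, v)" by (cases p)
    have A: "x \<in> ?L" "v \<in> ?V" "\<forall>h\<in>?L. v \<bullet> h = 2 * Bf P c x h" using p pxv by auto
    have "r *\<^sub>R x \<in> ?L" by (rule subspace_scale[OF subspace_Lset A(1)])
    moreover have "r *\<^sub>R v \<in> ?V" by (rule subspace_scale[OF subspace_sym A(2)])
    moreover have "\<forall>h\<in>?L. (r *\<^sub>R v) \<bullet> h = 2 * Bf P c (r *\<^sub>R x) h" using A(3) by (simp add: Bf_scale)
    ultimately show "r *\<^sub>R p \<in> {(x, v). x \<in> ?L \<and> v \<in> ?V \<and> (\<forall>h\<in>?L. v \<bullet> h = 2 * Bf P c x h)}"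
      using pxv by simp
  next
    fix p p' assume p: "p \<in> {(x, v). x \<in> ?L \<and> v \<in> ?V \<and> (\<forall>h\<in>?L. v \<bullet> h = 2 * Bf P c x h)}"
      and p': "p' \<in> {(x, v). x \<in> ?L \<and> v \<in> ?V \<and> (\<forall>h\<in>?L. v \<bullet> h = 2 * Bf P c x h)}"
    obtain x v where pxv: "p = (x, v)" by (cases p)
    obtain x' v' where pxv': "p' = (x', v')" by (cases p')
    have A: "x \<in> ?L" "v \<in> ?V" "\<forall>h\<in>?L. v \<bullet> h = 2 * Bf P c x h" using p pxv by auto
    have A': "x' \<in> ?L" "v' \<in> ?V" "\<forall>h\<in>?L. v' \<bullet> h = 2 * Bf P c x' h" using p' pxv' by auto
    have "x + x' \<in> ?L" by (rule subspace_add[OF subspace_Lset A(1) A'(1)])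
    moreover have "v + v' \<in> ?V" by (rule subspace_add[OF subspace_sym A(2) A'(2)])
    moreover have "\<forall>h\<in>?L. (v + v') \<bullet> h = 2 * Bf P c (x + x') h"
      using A(3) A'(3) by (simp add: Bf_add inner_add_left algebra_simps)
    ultimately show "p + p' \<in> {(x, v). x \<in> ?L \<and> v \<in> ?V \<and> (\<forall>h\<in>?L. v \<bullet> h = 2 * Bf P c x h)}"
      using pxv pxv' by simp
  qed
  have q0: "q 0 = 0"
    using q[OF subspace_0[OF subspace_sym]] subspace_0[OF subspace_Lset[of P Zs]] by (simp add: Qf_zero zero_ereal_def)
  show ?thesis unfolding gen_quad_form_def generalized_linear_def e using sub q0 by blast
qed

lemma diag_entry [simp]: "diag_mat d $ i $ j = (if i = j then d i else 0)"
  by (simp add: diag_mat_def)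

lemma diag_mult: "diag_mat a ** diag_mat b = diag_mat (\<lambda>i. a i * b i)"
proof -
  have "(diag_mat a ** diag_mat b) $ i $ j = (if i = j then a i * b i else 0)" for i j
  proof -
    have "(diag_mat a ** diag_mat b) $ i $ j = (\<Sum>k\<in>UNIV. (if i = k then a i else 0) * (if k = j then b k else 0))"
      by (simp add: matrix_matrix_mult_def)
    also have "\<dots> = (\<Sum>k\<in>UNIV. if k = i then (if i = j then a i * b i else 0) else 0)" by (rule sum.cong) auto
    also have "\<dots> = (if i = j then a i * b i else 0)" by simp
    finally show ?thesis .
  qed
  thus ?thesis by (simp add: vec_eq_iff)
qed

lemma diag_transpose: "transpose (diag_mat d) = diag_mat d"
  by (simp add: vec_eq_iff transpose_def)

lemma mv_axis: "(M *v axis b (1::real)) $ a = M$a$b"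
proof -
  have "(M *v axis b (1::real)) $ a = (\<Sum>j\<in>UNIV. M$a$j * (if j = b then 1 else 0))"
    unfolding matrix_vector_mult_def axis_def by simp
  also have "\<dots> = (\<Sum>j\<in>UNIV. if j = b then M$a$j else 0)" by (rule sum.cong) auto
  also have "\<dots> = M$a$b" by simp
  finally show ?thesis .
qed

lemma axis_quad: "axis a (1::real) \<bullet> (M *v axis b 1) = M$a$b"
  by (simp add: inner_axis' mv_axis)

lemma diag_mv: "(diag_mat d *v y) $ a = d a * y $ a"
proof -
  have "(diag_mat d *v y) $ a = (\<Sum>j\<in>UNIV. (if a = j then d a else 0) * y $ j)"
    by (simp add: matrix_vector_mult_def)
  also have "\<dots> = (\<Sum>j\<in>UNIV. if j = a then d a * y $ a else 0)" by (rule sum.cong) auto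
  also have "\<dots> = d a * y $ a" by simp
  finally show ?thesis .
qed

lemma diag_quad: "y \<bullet> (diag_mat d *v y) = (\<Sum>a\<in>UNIV. d a * (y$a)\<^sup>2)"
  by (simp add: inner_vec_def diag_mv power2_eq_square mult_ac)

lemma gram_psd:
  fixes C :: "real^'n^'n"
  assumes "\<And>i. 0 \<le> d i"
  shows "transpose C ** diag_mat d ** C \<in> psd_cone"
proof -
  have "transpose (transpose C ** diag_mat d ** C) = transpose C ** diag_mat d ** C"
    by (simp add: matrix_transpose_mul diag_transpose matrix_mul_assoc)
  moreover have "0 \<le> x \<bullet> ((transpose C ** diag_mat d ** C) *v x)" for x
  proof -
    have "x \<bullet> ((transpose C ** diag_mat d ** C) *v x) = (C *v x) \<bullet> (diag_mat d *v (C *v x))"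
      using quad_tl[of C x "diag_mat d"] by (simp add: tlm_def)
    also have "\<dots> \<ge> 0" unfolding diag_quad using assms by (intro sum_nonneg mult_nonneg_nonneg) auto
    finally show ?thesis .
  qed
  ultimately show ?thesis unfolding psd_cone_def by blast
qed

lemma conj_psd:
  fixes P :: "real^'n^'n"
  assumes "\<And>i. 0 \<le> d i"
  shows "P ** diag_mat d ** transpose P \<in> psd_cone"
  using gram_psd[of d "transpose P"] assms by simp

lemma nsd_tl: assumes "M \<in> nsd_cone" shows "y \<bullet> (tlm P M *v y) \<le> 0"
proof -
  have "(P *v y) \<bullet> (M *v (P *v y)) \<le> 0" using assms unfolding nsd_cone_def by blast
  thus ?thesis by (simp only: quad_tl)
qed

lemma decomp:
  fixes P G Y :: "real^'n^'n"
  assumes P: "orthogonal_matrix P" and G: "G \<in> psd_cone" and Y: "Y \<in> nsd_cone" and GY: "G \<bullet> Y = 0"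
    and S: "G + Y = P ** diag_mat lam ** transpose P"
  shows "tlm P G = diag_mat (\<lambda>i. max (lam i) 0)" "tlm P Y = diag_mat (\<lambda>i. min (lam i) 0)"
proof -
  define Gt where "Gt = tlm P G"
  define Yt where "Yt = tlm P Y"
  have sum: "Gt $ i $ j + Yt $ i $ j = (if i = j then lam i else 0)" for i j
  proof -
    have "Gt + Yt = diag_mat lam" unfolding Gt_def Yt_def tl_add[symmetric] S tl_conj[OF P] ..
    hence "(Gt + Yt) $ i $ j = diag_mat lam $ i $ j" by simp
    thus ?thesis by simp
  qed
  have Gd: "Gt $ i $ i \<ge> 0" for i using psd_tl[OF G, of "axis i 1" P] by (simp add: Gt_def axis_quad)
  have Yd: "Yt $ i $ i \<le> 0" for i using nsd_tl[OF Y, of "axis i 1" P] by (simp add: Yt_def axis_quad)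
  have Gs: "G \<in> sym_mats" using G unfolding psd_cone_def sym_mats_def by blast
  have Gsym: "Gt $ i $ j = Gt $ j $ i" for i j unfolding Gt_def by (rule tl_sym[OF Gs])
  have inner0: "(\<Sum>i\<in>UNIV. \<Sum>j\<in>UNIV. Gt $ i $ j * Yt $ i $ j) = 0"
    using GY tl_inner[OF P, of G Y] by (simp add: Gt_def Yt_def inner_vec_def)
  have Tnp: "Gt $ i $ j * Yt $ i $ j \<le> 0" for i j
  proof (cases "i = j")
    case True thus ?thesis using Gd[of i] Yd[of i] by (simp add: mult_nonneg_nonpos)
  next
    case False
    hence "Yt $ i $ j = - Gt $ i $ j" using sum[of i j] by simp
    thus ?thesis by simp
  qed
  have inner_each: "(\<Sum>j\<in>UNIV. Gt $ i $ j * Yt $ i $ j) = 0" for i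
  proof -
    have "(\<Sum>i\<in>UNIV. - (\<Sum>j\<in>UNIV. Gt $ i $ j * Yt $ i $ j)) = 0" using inner0 by (simp add: sum_negf)
    moreover have "\<forall>i\<in>UNIV. 0 \<le> - (\<Sum>j\<in>UNIV. Gt $ i $ j * Yt $ i $ j)"
      using Tnp by (simp add: sum_nonpos)
    ultimately have "\<forall>i\<in>UNIV. - (\<Sum>j\<in>UNIV. Gt $ i $ j * Yt $ i $ j) = 0"
      using sum_nonneg_eq_0_iff[of UNIV "\<lambda>i. - (\<Sum>j\<in>UNIV. Gt $ i $ j * Yt $ i $ j)"] by simp
    thus ?thesis by simp
  qed
  have T0: "Gt $ i $ j * Yt $ i $ j = 0" for i j
  proof -
    have "(\<Sum>j\<in>UNIV. - (Gt $ i $ j * Yt $ i $ j)) = 0" using inner_each[of i] by (simp add: sum_negf)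
    moreover have "\<forall>j\<in>UNIV. 0 \<le> - (Gt $ i $ j * Yt $ i $ j)" using Tnp by (simp add: mult_le_0_iff)
    ultimately have "\<forall>j\<in>UNIV. - (Gt $ i $ j * Yt $ i $ j) = 0"
      using sum_nonneg_eq_0_iff[of UNIV "\<lambda>j. - (Gt $ i $ j * Yt $ i $ j)"] by simp
    thus ?thesis by simp
  qed
  have entries: "Gt $ i $ j = (if i = j then max (lam i) 0 else 0) \<and> Yt $ i $ j = (if i = j then min (lam i) 0 else 0)" for i j
  proof (cases "i = j")
    case True
    have "Gt $ i $ i + Yt $ i $ i = lam i" using sum[of i i] by simp
    moreover have "Gt $ i $ i * Yt $ i $ i = 0" by (rule T0)
    ultimately show ?thesis using True Gd[of i] Yd[of i]
      by (auto simp: max_def min_def)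
  next
    case False
    have "Yt $ i $ j = - Gt $ i $ j" using sum[of i j] False by simp
    hence "Gt $ i $ j = 0" using T0[of i j] by simp
    thus ?thesis using False \<open>Yt $ i $ j = - Gt $ i $ j\<close> by simp
  qed
  show "tlm P G = diag_mat (\<lambda>i. max (lam i) 0)" using entries by (simp add: vec_eq_iff Gt_def)
  show "tlm P Y = diag_mat (\<lambda>i. min (lam i) 0)" using entries by (simp add: vec_eq_iff Yt_def)
qed

lemma penrose_unique:
  fixes M X Y :: "real^'n^'n"
  assumes X1: "M ** X ** M = M" and X2: "X ** M ** X = X"
    and X3: "transpose (M ** X) = M ** X" and X4: "transpose (X ** M) = X ** M"
    and Y1: "M ** Y ** M = M" and Y2: "Y ** M ** Y = Y"
    and Y3: "transpose (M ** Y) = M ** Y" and Y4: "transpose (Y ** M) = Y ** M"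
  shows "X = Y"
proof -
  have tM1: "transpose M = transpose M ** transpose Y ** transpose M"
    using arg_cong[OF Y1, of transpose] by (simp add: matrix_transpose_mul matrix_mul_assoc)
  have tM2: "transpose M = transpose M ** transpose X ** transpose M"
    using arg_cong[OF X1, of transpose] by (simp add: matrix_transpose_mul matrix_mul_assoc)
  have "X = X ** (M ** X)" using X2 by (simp add: matrix_mul_assoc)
  also have "\<dots> = X ** transpose (M ** X)" using X3 by simp
  also have "\<dots> = X ** transpose X ** transpose M" by (simp add: matrix_transpose_mul matrix_mul_assoc)
  also have "\<dots> = X ** transpose X ** (transpose M ** transpose Y ** transpose M)" using tM1 by simp
  also have "\<dots> = X ** (transpose X ** transpose M) ** (transpose Y ** transpose M)" by (simp add: matrix_mul_assoc)
  also have "\<dots> = X ** transpose (M ** X) ** transpose (M ** Y)" by (simp add: matrix_transpose_mul)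
  also have "\<dots> = X ** (M ** X) ** (M ** Y)" using X3 Y3 by simp
  also have "\<dots> = (X ** M ** X) ** M ** Y" by (simp add: matrix_mul_assoc)
  also have "\<dots> = X ** M ** Y" using X2 by simp
  finally have eX: "X = X ** M ** Y" .
  have "Y = (Y ** M) ** Y" using Y2 by simp
  also have "\<dots> = transpose (Y ** M) ** Y" using Y4 by simp
  also have "\<dots> = transpose M ** transpose Y ** Y" by (simp add: matrix_transpose_mul)
  also have "\<dots> = (transpose M ** transpose X ** transpose M) ** transpose Y ** Y" using tM2 by simp
  also have "\<dots> = (transpose M ** transpose X) ** (transpose M ** transpose Y) ** Y" by (simp add: matrix_mul_assoc)
  also have "\<dots> = transpose (X ** M) ** transpose (Y ** M) ** Y" by (simp add: matrix_transpose_mul)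
  also have "\<dots> = (X ** M) ** (Y ** M) ** Y" using X4 Y4 by simp
  also have "\<dots> = X ** M ** (Y ** M ** Y)" by (simp add: matrix_mul_assoc)
  also have "\<dots> = X ** M ** Y" using Y2 by simp
  finally have eY: "Y = X ** M ** Y" .
  show ?thesis using eX eY by simp
qed

lemma conj_mult:
  fixes P :: "real^'n^'n"
  assumes P: "orthogonal_matrix P"
  shows "(P ** A ** transpose P) ** (P ** B ** transpose P) = P ** (A ** B) ** transpose P"
proof -
  have "(P ** A ** transpose P) ** (P ** B ** transpose P) = P ** A ** (transpose P ** P) ** B ** transpose P"
    by (simp add: matrix_mul_assoc)
  thus ?thesis using orthD[OF P] by (simp add: matrix_mul_assoc)
qed

lemma conj_transpose:
  fixes P :: "real^'n^'n"
  shows "transpose (P ** A ** transpose P) = P ** transpose A ** transpose P"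
  by (simp add: matrix_transpose_mul matrix_mul_assoc)

lemma pinv_diag:
  fixes P :: "real^'n^'n"
  assumes P: "orthogonal_matrix P"
  shows "pinv (P ** diag_mat d ** transpose P) = P ** diag_mat (\<lambda>i. if d i = 0 then 0 else 1 / d i) ** transpose P"
proof -
  define e where "e = (\<lambda>i. if d i = 0 then 0 else 1 / d i)"
  define M where "M = P ** diag_mat d ** transpose P"
  define X where "X = P ** diag_mat e ** transpose P"
  have de: "(\<lambda>i. d i * e i) = (\<lambda>i. e i * d i)" by (simp add: mult.commute)
  have ded: "(\<lambda>i. d i * e i * d i) = d" by (rule ext) (simp add: e_def)
  have ede: "(\<lambda>i. e i * d i * e i) = e" by (rule ext) (simp add: e_def)
  have MX: "M ** X = P ** diag_mat (\<lambda>i. d i * e i) ** transpose P"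
    unfolding M_def X_def conj_mult[OF P] diag_mult ..
  have XM: "X ** M = P ** diag_mat (\<lambda>i. e i * d i) ** transpose P"
    unfolding M_def X_def conj_mult[OF P] diag_mult ..
  have p1: "M ** X ** M = M" unfolding MX unfolding M_def conj_mult[OF P] diag_mult ded ..
  have p2: "X ** M ** X = X" unfolding XM unfolding X_def conj_mult[OF P] diag_mult ede ..
  have p3: "transpose (M ** X) = M ** X" unfolding MX conj_transpose diag_transpose ..
  have p4: "transpose (X ** M) = X ** M" unfolding XM conj_transpose diag_transpose ..
  have "pinv M = X"
    unfolding pinv_def
  proof (rule the_equality)
    show "M ** X ** M = M \<and> X ** M ** X = X \<and> transpose (M ** X) = M ** X \<and> transpose (X ** M) = X ** M"
      using p1 p2 p3 p4 by blast
    fix Y assume "M ** Y ** M = M \<and> Y ** M ** Y = Y \<and> transpose (M ** Y) = M ** Y \<and> transpose (Y ** M) = Y ** M"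
    thus "Y = X" using penrose_unique[OF _ _ _ _ p1 p2 p3 p4] by blast
  qed
  thus ?thesis unfolding M_def X_def e_def .
qed

lemma tl_prod3:
  fixes P :: "real^'n^'n"
  assumes P: "orthogonal_matrix P"
  shows "tlm P (H ** (P ** D ** transpose P) ** H) = tlm P H ** D ** tlm P H"
proof -
  have "tlm P (H ** (P ** D ** transpose P) ** H) = transpose P ** H ** P ** D ** (transpose P ** H ** P)"
    by (simp add: tlm_def matrix_mul_assoc)
  thus ?thesis by (simp add: tlm_def)
qed

lemma sigma_val:
  fixes P H :: "real^'n^'n"
  assumes P: "orthogonal_matrix P" and H: "H \<in> sym_mats"
  shows "- (1/2) * sigma_term (P ** diag_mat (\<lambda>i. max (lam i) 0) ** transpose P)
                               (P ** diag_mat (\<lambda>i. min (lam i) 0) ** transpose P) H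
       = (\<Sum>i\<in>UNIV. \<Sum>j\<in>UNIV. (if 0 < lam i \<and> lam j < 0 then - lam j / lam i else 0) * (tlm P H $ i $ j)\<^sup>2)"
proof -
  define e where "e = (\<lambda>i. if max (lam i) 0 = 0 then 0 else 1 / max (lam i) 0)"
  define Ht where "Ht = tlm P H"
  have pv: "pinv (P ** diag_mat (\<lambda>i. max (lam i) 0) ** transpose P) = P ** diag_mat e ** transpose P"
    unfolding e_def by (rule pinv_diag[OF P])
  have "(P ** diag_mat (\<lambda>i. min (lam i) 0) ** transpose P) \<bullet> (H ** (P ** diag_mat e ** transpose P) ** H)
      = tlm P (P ** diag_mat (\<lambda>i. min (lam i) 0) ** transpose P) \<bullet> tlm P (H ** (P ** diag_mat e ** transpose P) ** H)"
    by (rule tl_inner[OF P, symmetric])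
  also have "\<dots> = diag_mat (\<lambda>i. min (lam i) 0) \<bullet> (Ht ** diag_mat e ** Ht)"
    unfolding tl_conj[OF P] tl_prod3[OF P] Ht_def ..
  also have "\<dots> = (\<Sum>j\<in>UNIV. \<Sum>i\<in>UNIV. min (lam j) 0 * e i * (Ht $ i $ j)\<^sup>2)"
  proof -
    have "diag_mat (\<lambda>i. min (lam i) 0) \<bullet> (Ht ** diag_mat e ** Ht) = (\<Sum>j\<in>UNIV. min (lam j) 0 * (Ht ** diag_mat e ** Ht) $ j $ j)"
    proof -
      have "diag_mat (\<lambda>i. min (lam i) 0) \<bullet> (Ht ** diag_mat e ** Ht)
          = (\<Sum>j\<in>UNIV. \<Sum>k\<in>UNIV. (if j = k then min (lam j) 0 else 0) * (Ht ** diag_mat e ** Ht) $ j $ k)"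
        by (simp add: inner_vec_def)
      also have "\<dots> = (\<Sum>j\<in>UNIV. \<Sum>k\<in>UNIV. if k = j then min (lam j) 0 * (Ht ** diag_mat e ** Ht) $ j $ j else 0)"
        by (intro sum.cong) auto
      finally show ?thesis by simp
    qed
    moreover have "(Ht ** diag_mat e ** Ht) $ j $ j = (\<Sum>i\<in>UNIV. e i * (Ht $ i $ j)\<^sup>2)" for j
    proof -
      have "(Ht ** diag_mat e ** Ht) $ j $ j = (\<Sum>i\<in>UNIV. (Ht ** diag_mat e) $ j $ i * Ht $ i $ j)"
        by (simp add: matrix_matrix_mult_def)
      also have "\<dots> = (\<Sum>i\<in>UNIV. (Ht $ j $ i * e i) * Ht $ i $ j)"
      proof (rule sum.cong)
        fix i
        have "(Ht ** diag_mat e) $ j $ i = (\<Sum>k\<in>UNIV. Ht $ j $ k * (if k = i then e k else 0))"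
          by (simp add: matrix_matrix_mult_def)
        also have "\<dots> = (\<Sum>k\<in>UNIV. if k = i then Ht $ j $ i * e i else 0)" by (rule sum.cong) auto
        finally show "(Ht ** diag_mat e) $ j $ i * Ht $ i $ j = (Ht $ j $ i * e i) * Ht $ i $ j" by simp
      qed simp
      also have "\<dots> = (\<Sum>i\<in>UNIV. e i * (Ht $ i $ j)\<^sup>2)"
        using tl_sym[OF H, of P] by (simp add: Ht_def power2_eq_square mult_ac)
      finally show ?thesis .
    qed
    ultimately show ?thesis by (simp add: sum_distrib_left mult.assoc)
  qed
  finally have I: "(P ** diag_mat (\<lambda>i. min (lam i) 0) ** transpose P) \<bullet> (H ** (P ** diag_mat e ** transpose P) ** H)
      = (\<Sum>j\<in>UNIV. \<Sum>i\<in>UNIV. min (lam j) 0 * e i * (Ht $ i $ j)\<^sup>2)" .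
  have "- (1/2) * sigma_term (P ** diag_mat (\<lambda>i. max (lam i) 0) ** transpose P)
                               (P ** diag_mat (\<lambda>i. min (lam i) 0) ** transpose P) H
     = - (\<Sum>j\<in>UNIV. \<Sum>i\<in>UNIV. min (lam j) 0 * e i * (Ht $ i $ j)\<^sup>2)"
    unfolding sigma_term_def pv I by simp
  also have "\<dots> = (\<Sum>i\<in>UNIV. \<Sum>j\<in>UNIV. - (min (lam j) 0 * e i) * (Ht $ i $ j)\<^sup>2)"
    by (subst sum.swap) (simp add: sum_negf)
  also have "\<dots> = (\<Sum>i\<in>UNIV. \<Sum>j\<in>UNIV. (if 0 < lam i \<and> lam j < 0 then - lam j / lam i else 0) * (Ht $ i $ j)\<^sup>2)"
    by (intro sum.cong refl) (auto simp: e_def min_def max_def)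
  finally show ?thesis unfolding Ht_def .
qed

definition SC :: "('n \<Rightarrow> real) \<Rightarrow> ('n \<Rightarrow> real) \<Rightarrow> bool" where
  "SC z m \<longleftrightarrow> (\<forall>i. (0 < z i \<and> m i = 0) \<or> (z i = 0 \<and> m i < 0))"

definition wv :: "('n \<Rightarrow> real) \<Rightarrow> 'n \<Rightarrow> real" where
  "wv z i = (if 0 < z i then 1 / z i else 0)"

lemma SC_z_nonneg: "SC z m \<Longrightarrow> 0 \<le> z i" unfolding SC_def by (metis order.strict_implies_order order_refl)
lemma SC_m_nonpos: "SC z m \<Longrightarrow> m i \<le> 0" unfolding SC_def by (metis order.strict_implies_order order_refl)
lemma SC_neg: "SC z m \<Longrightarrow> m i < 0 \<Longrightarrow> z i = 0" unfolding SC_def by force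
lemma SC_zero: "SC z m \<Longrightarrow> \<not> m i < 0 \<Longrightarrow> m i = 0" unfolding SC_def by force
lemma wv_nonneg: "0 \<le> wv z i" unfolding wv_def by simp
lemma wv_zw: "z i * (wv z i)\<^sup>2 = wv z i" unfolding wv_def by (simp add: power2_eq_square)

lemma inner_diag: "diag_mat m \<bullet> (U::real^'n^'n) = (\<Sum>j\<in>UNIV. m j * U $ j $ j)"
proof -
  have "diag_mat m \<bullet> U = (\<Sum>j\<in>UNIV. \<Sum>k\<in>UNIV. (if j = k then m j else 0) * U $ j $ k)"
    by (simp add: inner_vec_def)
  also have "\<dots> = (\<Sum>j\<in>UNIV. \<Sum>k\<in>UNIV. if k = j then m j * U $ j $ j else 0)"
    by (intro sum.cong) auto
  finally show ?thesis by simp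
qed

lemma YU:
  fixes P :: "real^'n^'n"
  assumes P: "orthogonal_matrix P"
  shows "(P ** diag_mat m ** transpose P) \<bullet> U = (\<Sum>j\<in>UNIV. m j * tlm P U $ j $ j)"
  using tl_inner[OF P, of "P ** diag_mat m ** transpose P" U] by (simp add: tl_conj[OF P] inner_diag)

lemma Mt_entry:
  fixes P :: "real^'n^'n"
  assumes P: "orthogonal_matrix P"
  shows "tlm P (P ** diag_mat z ** transpose P + t *\<^sub>R U) $ a $ b = (if a = b then z a else 0) + t * tlm P U $ a $ b"
  by (simp add: tl_add tl_scale tl_conj[OF P])

lemma quot_eq:
  fixes P :: "real^'n^'n"
  assumes P: "orthogonal_matrix P" and z: "\<And>i. 0 \<le> z i" and t: "t > 0"
  shows "second_diff_quot (indicator_fun psd_cone) (P ** diag_mat z ** transpose P) Y t U =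
    (if P ** diag_mat z ** transpose P + t *\<^sub>R U \<in> psd_cone then ereal (- 2 * (Y \<bullet> U) / t) else \<infinity>)"
proof -
  have Z: "P ** diag_mat z ** transpose P \<in> psd_cone" by (rule conj_psd[OF z])
  have t2: "t\<^sup>2 / 2 > 0" using t by simp
  show ?thesis
  proof (cases "P ** diag_mat z ** transpose P + t *\<^sub>R U \<in> psd_cone")
    case True
    have "(- (t * (Y \<bullet> U))) / (t\<^sup>2 / 2) = - 2 * (Y \<bullet> U) / t"
      using t by (simp add: field_simps power2_eq_square)
    thus ?thesis using True Z t2 unfolding second_diff_quot_def indicator_fun_def
      by (simp add: zero_ereal_def)
  next
    case False
    thus ?thesis using Z t2 unfolding second_diff_quot_def indicator_fun_def by simp
  qed
qed

lemma quad_axis_pair: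
  fixes M :: "real^'n^'n"
  shows "(axis j 1 + s *\<^sub>R axis k 1) \<bullet> (M *v (axis j 1 + s *\<^sub>R axis k 1)) =
         M $ j $ j + s * M $ j $ k + s * M $ k $ j + s\<^sup>2 * M $ k $ k"
  by (simp add: matrix_vector_right_distrib matrix_vector_mult_scaleR inner_add_left inner_add_right
      axis_quad power2_eq_square algebra_simps)

lemma psd_pair:
  fixes P :: "real^'n^'n"
  assumes P: "orthogonal_matrix P" and SC: "SC z m" and t: "t > 0"
    and psd: "P ** diag_mat z ** transpose P + t *\<^sub>R U \<in> psd_cone" and U: "U \<in> sym_mats"
    and j: "m j < 0" and k: "m k < 0"
  shows "2 * \<bar>tlm P U $ j $ k\<bar> \<le> tlm P U $ j $ j + tlm P U $ k $ k"
proof -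
  define Ut where "Ut = tlm P U"
  define Mt where "Mt = tlm P (P ** diag_mat z ** transpose P + t *\<^sub>R U)"
  have zj: "z j = 0" and zk: "z k = 0" using SC_neg[OF SC] j k by auto
  have Me: "Mt $ a $ b = t * Ut $ a $ b" if "a \<in> {j, k}" "b \<in> {j, k}" for a b
    using that zj zk unfolding Mt_def Ut_def Mt_entry[OF P] by auto
  have sym: "Ut $ k $ j = Ut $ j $ k" unfolding Ut_def by (rule tl_sym[OF U])
  have q: "0 \<le> Mt $ j $ j + s * Mt $ j $ k + s * Mt $ k $ j + s\<^sup>2 * Mt $ k $ k" for s
    using psd_tl[OF psd, of "axis j 1 + s *\<^sub>R axis k 1" P] unfolding quad_axis_pair Mt_def .
  have "0 \<le> t * (Ut $ j $ j + Ut $ k $ k + 2 * s * Ut $ j $ k)" if "s\<^sup>2 = 1" for s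
    using q[of s] that sym by (simp add: Me algebra_simps)
  hence "0 \<le> Ut $ j $ j + Ut $ k $ k + 2 * s * Ut $ j $ k" if "s\<^sup>2 = 1" for s
    using that t by (simp add: zero_le_mult_iff)
  from this[of 1] this[of "-1"] show ?thesis unfolding Ut_def by (simp add: abs_if)
qed

lemma psd_diag:
  fixes P :: "real^'n^'n"
  assumes P: "orthogonal_matrix P" and SC: "SC z m" and t: "t > 0"
    and psd: "P ** diag_mat z ** transpose P + t *\<^sub>R U \<in> psd_cone"
    and j: "m j < 0"
  shows "0 \<le> tlm P U $ j $ j"
proof -
  have zj: "z j = 0" using SC_neg[OF SC] j by auto
  have "0 \<le> tlm P (P ** diag_mat z ** transpose P + t *\<^sub>R U) $ j $ j"
    using psd_tl[OF psd, of "axis j 1" P] by (simp add: axis_quad)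
  hence "0 \<le> t * tlm P U $ j $ j" using zj unfolding Mt_entry[OF P] by simp
  thus ?thesis using t by (simp add: zero_le_mult_iff)
qed

definition Sj :: "real^'n^'n \<Rightarrow> ('n \<Rightarrow> real) \<Rightarrow> real^'n^'n \<Rightarrow> 'n \<Rightarrow> real" where
  "Sj P z U j = (\<Sum>i\<in>UNIV. wv z i * (tlm P U $ i $ j)\<^sup>2)"

definition cv :: "real^'n^'n \<Rightarrow> ('n \<Rightarrow> real) \<Rightarrow> real^'n^'n \<Rightarrow> 'n \<Rightarrow> real^'n" where
  "cv P z U j = (\<chi> a. wv z a * tlm P U $ a $ j)"

definition Rj :: "real^'n^'n \<Rightarrow> ('n \<Rightarrow> real) \<Rightarrow> real^'n^'n \<Rightarrow> 'n \<Rightarrow> real" where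
  "Rj P z U j = cv P z U j \<bullet> (tlm P U *v cv P z U j)"

lemma Rj_expand: "Rj P z U j = (\<Sum>a\<in>UNIV. \<Sum>b\<in>UNIV. (wv z a * tlm P U $ a $ j) * tlm P U $ a $ b * (wv z b * tlm P U $ b $ j))"
  unfolding Rj_def quad_form_expand cv_def by simp

lemma schur:
  fixes P :: "real^'n^'n"
  assumes P: "orthogonal_matrix P" and SC: "SC z m" and t: "t > 0"
    and psd: "P ** diag_mat z ** transpose P + t *\<^sub>R U \<in> psd_cone" and U: "U \<in> sym_mats"
    and j: "m j < 0"
  shows "t * Sj P z U j - t\<^sup>2 * Rj P z U j \<le> tlm P U $ j $ j"
proof -
  define Ut where "Ut = tlm P U"
  define c where "c = cv P z U j"
  define y where "y = axis j (1::real) - t *\<^sub>R c"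
  define S where "S = Sj P z U j"
  define R where "R = Rj P z U j"
  have zj: "z j = 0" using SC_neg[OF SC] j by auto
  have wj: "wv z j = 0" using zj by (simp add: wv_def)
  have sym: "Ut $ a $ b = Ut $ b $ a" for a b unfolding Ut_def by (rule tl_sym[OF U])
  have Mt: "tlm P (P ** diag_mat z ** transpose P + t *\<^sub>R U) = diag_mat z + t *\<^sub>R Ut"
    by (simp add: tl_add tl_scale tl_conj[OF P] Ut_def)
  have "0 \<le> y \<bullet> ((diag_mat z + t *\<^sub>R Ut) *v y)" using psd_tl[OF psd, of y P] unfolding Mt .
  also have "\<dots> = y \<bullet> (diag_mat z *v y) + t * (y \<bullet> (Ut *v y))"
    by (simp add: matrix_vector_mult_add_rdistrib inner_add_right scaleR_matrix_vector_assoc[symmetric])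
  finally have main: "0 \<le> y \<bullet> (diag_mat z *v y) + t * (y \<bullet> (Ut *v y))" .
  have A: "y \<bullet> (diag_mat z *v y) = t\<^sup>2 * S"
  proof -
    have "z a * (y $ a)\<^sup>2 = t\<^sup>2 * (wv z a * (Ut $ a $ j)\<^sup>2)" for a
    proof (cases "a = j")
      case True thus ?thesis using zj wj by simp
    next
      case False
      hence "y $ a = - (t * (wv z a * Ut $ a $ j))" by (simp add: y_def c_def cv_def Ut_def axis_def)
      hence "z a * (y $ a)\<^sup>2 = t\<^sup>2 * (z a * (wv z a)\<^sup>2) * (Ut $ a $ j)\<^sup>2"
        by (simp add: power2_eq_square algebra_simps)
      thus ?thesis by (simp add: wv_zw)
    qed
    thus ?thesis unfolding diag_quad S_def Sj_def Ut_def by (simp add: sum_distrib_left)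
  qed
  have e1: "axis j 1 \<bullet> (Ut *v c) = S"
  proof -
    have "axis j 1 \<bullet> (Ut *v c) = (\<Sum>b\<in>UNIV. Ut $ j $ b * (wv z b * Ut $ b $ j))"
      by (simp add: inner_axis' matrix_vector_mult_def c_def cv_def Ut_def)
    also have "\<dots> = S" unfolding S_def Sj_def
      by (intro sum.cong refl) (simp add: tl_sym[OF U, of P j] power2_eq_square Ut_def mult_ac)
    finally show ?thesis .
  qed
  have e2: "c \<bullet> (Ut *v axis j 1) = S"
  proof -
    have "c \<bullet> (Ut *v axis j 1) = (\<Sum>a\<in>UNIV. (wv z a * Ut $ a $ j) * Ut $ a $ j)"
      by (simp add: inner_vec_def mv_axis c_def cv_def Ut_def)
    also have "\<dots> = S" unfolding S_def Sj_def
      by (intro sum.cong refl) (simp add: power2_eq_square Ut_def mult_ac)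
    finally show ?thesis .
  qed
  have e3: "c \<bullet> (Ut *v c) = R" unfolding R_def Rj_def c_def Ut_def ..
  have B: "y \<bullet> (Ut *v y) = Ut $ j $ j - 2 * t * S + t\<^sup>2 * R"
  proof -
    have "y \<bullet> (Ut *v y) = axis j 1 \<bullet> (Ut *v axis j 1) - t * (axis j 1 \<bullet> (Ut *v c))
          - t * (c \<bullet> (Ut *v axis j 1)) + t * t * (c \<bullet> (Ut *v c))"
      unfolding y_def
      by (simp add: matrix_vector_mult_diff_distrib matrix_vector_mult_scaleR inner_diff_left inner_diff_right
          algebra_simps)
    thus ?thesis using e1 e2 e3 by (simp add: axis_quad power2_eq_square algebra_simps)
  qed
  have "0 \<le> t * (Ut $ j $ j - t * S + t\<^sup>2 * R)"
    using main A B by (simp add: power2_eq_square algebra_simps)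
  hence "0 \<le> Ut $ j $ j - t * S + t\<^sup>2 * R" using t by (simp add: zero_le_mult_iff)
  thus ?thesis unfolding S_def R_def Ut_def by simp
qed

definition ccf :: "('n \<Rightarrow> real) \<Rightarrow> ('n \<Rightarrow> real) \<Rightarrow> 'n \<Rightarrow> 'n \<Rightarrow> real" where
  "ccf z m i j = - 2 * m j * wv z i"

definition Zneg :: "('n \<Rightarrow> real) \<Rightarrow> 'n \<Rightarrow> 'n \<Rightarrow> bool" where
  "Zneg m i j \<longleftrightarrow> m i < 0 \<and> m j < 0"

lemma Qf_ccf: "Qf P (ccf z m) W = (\<Sum>j\<in>UNIV. (- 2 * m j) * Sj P z W j)"
  unfolding Qf_def Sj_def ccf_def
  by (subst sum.swap) (simp add: sum_distrib_left mult_ac)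

lemma F_facts:
  fixes W :: "'b::real_normed_vector"
  shows "eventually (\<lambda>p. 0 < fst p) (at_right (0::real) \<times>\<^sub>F inf (nhds W) (principal V))"
    "eventually (\<lambda>p. snd p \<in> V) (at_right (0::real) \<times>\<^sub>F inf (nhds W) (principal V))"
    "((\<lambda>p. fst p) \<longlongrightarrow> 0) (at_right (0::real) \<times>\<^sub>F inf (nhds W) (principal V))"
    "((\<lambda>p. snd p) \<longlongrightarrow> W) (at_right (0::real) \<times>\<^sub>F inf (nhds W) (principal V))"
proof -
  have f: "filterlim fst (at_right (0::real)) (at_right (0::real) \<times>\<^sub>F inf (nhds W) (principal V))"
    by (rule filterlim_fst)
  have s: "filterlim snd (inf (nhds W) (principal V)) (at_right (0::real) \<times>\<^sub>F inf (nhds W) (principal V))"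
    by (rule filterlim_snd)
  show "eventually (\<lambda>p. 0 < fst p) (at_right (0::real) \<times>\<^sub>F inf (nhds W) (principal V))"
    using f eventually_at_right_less[of "0::real"] unfolding filterlim_iff by blast
  show "eventually (\<lambda>p. snd p \<in> V) (at_right (0::real) \<times>\<^sub>F inf (nhds W) (principal V))"
    using s unfolding filterlim_inf filterlim_principal by blast
  show "((\<lambda>p. fst p) \<longlongrightarrow> 0) (at_right (0::real) \<times>\<^sub>F inf (nhds W) (principal V))"
    using filterlim_mono[OF f at_within_le_nhds order_refl] by simp
  show "((\<lambda>p. snd p) \<longlongrightarrow> W) (at_right (0::real) \<times>\<^sub>F inf (nhds W) (principal V))"
    using s unfolding filterlim_inf by simp
qed

lemma key_ineq:
  fixes P :: "real^'n^'n"
  assumes P: "orthogonal_matrix P" and SC: "SC z m" and t: "t > 0"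
    and psd: "P ** diag_mat z ** transpose P + t *\<^sub>R U \<in> psd_cone" and U: "U \<in> sym_mats"
  shows "(\<Sum>j\<in>UNIV. (- 2 * m j) * (Sj P z U j - t * Rj P z U j)) \<le> - 2 * ((P ** diag_mat m ** transpose P) \<bullet> U) / t"
proof -
  have "- 2 * ((P ** diag_mat m ** transpose P) \<bullet> U) / t = (\<Sum>j\<in>UNIV. (- 2 * m j) * (tlm P U $ j $ j / t))"
    unfolding YU[OF P] by (simp add: sum_distrib_left sum_divide_distrib mult_ac)
  moreover have "(- 2 * m j) * (Sj P z U j - t * Rj P z U j) \<le> (- 2 * m j) * (tlm P U $ j $ j / t)" for j
  proof (cases "m j < 0")
    case True
    have "t * Sj P z U j - t\<^sup>2 * Rj P z U j \<le> tlm P U $ j $ j" by (rule schur[OF P SC t psd U True])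
    hence "Sj P z U j - t * Rj P z U j \<le> tlm P U $ j $ j / t"
      using t by (simp add: field_simps power2_eq_square)
    thus ?thesis using True by (intro mult_left_mono) auto
  next
    case False thus ?thesis using SC_zero[OF SC False] by simp
  qed
  ultimately show ?thesis by (simp add: sum_mono)
qed

lemma LB_in:
  fixes P :: "real^'n^'n"
  assumes P: "orthogonal_matrix P" and SC: "SC z m" and W: "W \<in> Lset P (Zneg m)"
    and y: "y < ereal (Qf P (ccf z m) W)"
  shows "eventually (\<lambda>p. y < case_prod (second_diff_quot (indicator_fun psd_cone)
            (P ** diag_mat z ** transpose P) (P ** diag_mat m ** transpose P)) p)
         (at_right 0 \<times>\<^sub>F inf (nhds W) (principal sym_mats))"
proof -
  let ?F = "at_right (0::real) \<times>\<^sub>F inf (nhds W) (principal (sym_mats :: (real^'n^'n) set))"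
  define phi where "phi = (\<lambda>p::real \<times> (real^'n^'n). (\<Sum>j\<in>UNIV. (- 2 * m j) * (Sj P z (snd p) j - fst p * Rj P z (snd p) j)))"
  have TS: "((\<lambda>p. tlm P (snd p) $ a $ b) \<longlongrightarrow> tlm P W $ a $ b) ?F" for a b
    by (rule tl_continuous[OF F_facts(4)])
  have "(phi \<longlongrightarrow> (\<Sum>j\<in>UNIV. (- 2 * m j) * (Sj P z W j - 0 * Rj P z W j))) ?F"
    unfolding phi_def Sj_def Rj_expand by (intro tendsto_intros TS F_facts(3))
  hence phil: "(phi \<longlongrightarrow> Qf P (ccf z m) W) ?F" by (simp add: Qf_ccf)
  have z: "\<And>i. 0 \<le> z i" using SC_z_nonneg[OF SC] by blast
  have base: "eventually (\<lambda>p. 0 < fst p \<and> snd p \<in> sym_mats) ?F"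
    by (rule eventually_conj[OF F_facts(1) F_facts(2)])
  show ?thesis
  proof (cases y)
    case (real r)
    have evr: "eventually (\<lambda>p. r < phi p) ?F" using phil y real by (intro order_tendstoD(1)) auto
    from base evr show ?thesis
    proof (rule eventually_elim2)
      fix p :: "real \<times> (real^'n^'n)" assume b: "0 < fst p \<and> snd p \<in> sym_mats" and rp: "r < phi p"
      obtain t U where p: "p = (t, U)" by (cases p)
      have t: "t > 0" and U: "U \<in> sym_mats" using b p by auto
      show "y < case_prod (second_diff_quot (indicator_fun psd_cone)
            (P ** diag_mat z ** transpose P) (P ** diag_mat m ** transpose P)) p"
      proof (cases "P ** diag_mat z ** transpose P + t *\<^sub>R U \<in> psd_cone")
        case True
        have "phi p \<le> - 2 * ((P ** diag_mat m ** transpose P) \<bullet> U) / t"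
          unfolding phi_def p using key_ineq[OF P SC t True U] by simp
        thus ?thesis using rp real p quot_eq[OF P z t] True by simp
      next
        case False thus ?thesis using real p quot_eq[OF P z t] by simp
      qed
    qed
  next
    case PInf thus ?thesis using y by simp
  next
    case MInf
    show ?thesis using base
    proof (rule eventually_mono)
      fix p :: "real \<times> (real^'n^'n)" assume b: "0 < fst p \<and> snd p \<in> sym_mats"
      obtain t U where p: "p = (t, U)" by (cases p)
      have t: "t > 0" using b p by auto
      show "y < case_prod (second_diff_quot (indicator_fun psd_cone)
            (P ** diag_mat z ** transpose P) (P ** diag_mat m ** transpose P)) p"
        using MInf p quot_eq[OF P z t] by simp
    qed
  qed
qed

lemma sum_two_le:
  fixes f :: "'n::finite \<Rightarrow> real"
  assumes "\<And>l. 0 \<le> f l"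
  shows "(if j = k then f j else f j + f k) \<le> (\<Sum>l\<in>UNIV. f l)"
proof (cases "j = k")
  case True thus ?thesis using member_le_sum[of j UNIV f] assms by simp
next
  case False
  have "sum f {j, k} \<le> sum f UNIV" using assms by (intro sum_mono2) auto
  thus ?thesis using False by simp
qed

lemma LB_out:
  fixes P :: "real^'n^'n"
  assumes P: "orthogonal_matrix P" and SC: "SC z m" and W: "W \<in> sym_mats" and WL: "W \<notin> Lset P (Zneg m)"
    and y: "y < \<infinity>"
  shows "eventually (\<lambda>p. y < case_prod (second_diff_quot (indicator_fun psd_cone)
            (P ** diag_mat z ** transpose P) (P ** diag_mat m ** transpose P)) p)
         (at_right 0 \<times>\<^sub>F inf (nhds W) (principal sym_mats))"
proof -
  let ?F = "at_right (0::real) \<times>\<^sub>F inf (nhds W) (principal (sym_mats :: (real^'n^'n) set))"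
  obtain j k where j: "m j < 0" and k: "m k < 0" and Wjk: "tlm P W $ j $ k \<noteq> 0"
    using W WL unfolding Lset_def Zneg_def by blast
  obtain B where yB: "y \<le> ereal B" using y by (cases y) auto
  define mu where "mu = min (- m j) (- m k)"
  define om where "om = \<bar>tlm P W $ j $ k\<bar>"
  have mu: "mu > 0" using j k by (simp add: mu_def)
  have om: "om > 0" using Wjk by (simp add: om_def)
  have z: "\<And>i. 0 \<le> z i" using SC_z_nonneg[OF SC] by blast
  have base: "eventually (\<lambda>p. 0 < fst p \<and> snd p \<in> sym_mats) ?F"
    by (rule eventually_conj[OF F_facts(1) F_facts(2)])
  have e1: "eventually (\<lambda>p. om / 2 < \<bar>tlm P (snd p) $ j $ k\<bar>) ?F"
  proof -
    have "((\<lambda>p. \<bar>tlm P (snd p) $ j $ k\<bar>) \<longlongrightarrow> om) ?F"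
      unfolding om_def by (intro tendsto_intros tl_continuous[OF F_facts(4)])
    thus ?thesis using om by (intro order_tendstoD(1)) auto
  qed
  have e2: "eventually (\<lambda>p. fst p < mu * om / (\<bar>B\<bar> + 1)) ?F"
    using mu om by (intro order_tendstoD(2)[OF F_facts(3)]) (simp add: divide_pos_pos)
  have "eventually (\<lambda>p. (0 < fst p \<and> snd p \<in> sym_mats) \<and> om / 2 < \<bar>tlm P (snd p) $ j $ k\<bar>
           \<and> fst p < mu * om / (\<bar>B\<bar> + 1)) ?F"
    by (rule eventually_conj[OF base eventually_conj[OF e1 e2]])
  thus ?thesis
  proof (rule eventually_mono)
    fix p :: "real \<times> (real^'n^'n)"
    assume A: "(0 < fst p \<and> snd p \<in> sym_mats) \<and> om / 2 < \<bar>tlm P (snd p) $ j $ k\<bar> \<and> fst p < mu * om / (\<bar>B\<bar> + 1)"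
    obtain t U where p: "p = (t, U)" by (cases p)
    have t: "t > 0" and U: "U \<in> sym_mats" and Ujk: "om / 2 < \<bar>tlm P U $ j $ k\<bar>"
      and tsmall: "t < mu * om / (\<bar>B\<bar> + 1)" using A p by auto
    show "y < case_prod (second_diff_quot (indicator_fun psd_cone)
            (P ** diag_mat z ** transpose P) (P ** diag_mat m ** transpose P)) p"
    proof (cases "P ** diag_mat z ** transpose P + t *\<^sub>R U \<in> psd_cone")
      case False thus ?thesis using p quot_eq[OF P z t] y by simp
    next
      case True
      define f where "f = (\<lambda>l. - m l * tlm P U $ l $ l)"
      have fnn: "0 \<le> f l" for l
      proof (cases "m l < 0")
        case True': True
        thus ?thesis using psd_diag[OF P SC t \<open>P ** diag_mat z ** transpose P + t *\<^sub>R U \<in> psd_cone\<close> True']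
          by (simp add: f_def mult_nonpos_nonneg)
      next
        case False thus ?thesis using SC_zero[OF SC False] by (simp add: f_def)
      qed
      have djj: "0 \<le> tlm P U $ j $ j" and dkk: "0 \<le> tlm P U $ k $ k"
        using psd_diag[OF P SC t True] j k by auto
      have pair: "2 * \<bar>tlm P U $ j $ k\<bar> \<le> tlm P U $ j $ j + tlm P U $ k $ k"
        by (rule psd_pair[OF P SC t True U j k])
      have muj: "mu \<le> - m j" and muk: "mu \<le> - m k" by (auto simp: mu_def)
      have "mu * (tlm P U $ j $ j + tlm P U $ k $ k) / 2 \<le> (if j = k then f j else f j + f k)"
      proof (cases "j = k")
        case True
        thus ?thesis using mult_right_mono[OF muj djj] by (simp add: f_def)
      next
        case False
        have "mu * tlm P U $ j $ j \<le> f j" using mult_right_mono[OF muj djj] by (simp add: f_def)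
        moreover have "mu * tlm P U $ k $ k \<le> f k" using mult_right_mono[OF muk dkk] by (simp add: f_def)
        ultimately show ?thesis using False fnn[of j] fnn[of k] by (simp add: distrib_left)
      qed
      also have "\<dots> \<le> sum f UNIV" by (rule sum_two_le[OF fnn])
      finally have s1: "mu * (tlm P U $ j $ j + tlm P U $ k $ k) / 2 \<le> sum f UNIV" .
      have "mu * om / 2 < mu * \<bar>tlm P U $ j $ k\<bar>" using Ujk mu by simp
      also have "\<dots> \<le> mu * (tlm P U $ j $ j + tlm P U $ k $ k) / 2" using pair mu by simp
      finally have s2: "mu * om / 2 < sum f UNIV" using s1 by simp
      have val: "- 2 * ((P ** diag_mat m ** transpose P) \<bullet> U) / t = 2 * sum f UNIV / t"
        unfolding YU[OF P] f_def by (simp add: sum_negf)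
      have "\<bar>B\<bar> + 1 < mu * om / t" using tsmall t mu om by (simp add: field_simps)
      also have "mu * om / t < 2 * sum f UNIV / t" using s2 t by (simp add: divide_strict_right_mono)
      finally have "B < - 2 * ((P ** diag_mat m ** transpose P) \<bullet> U) / t" unfolding val by simp
      thus ?thesis using p quot_eq[OF P z t] True yB by (simp add: le_less_trans)
    qed
  qed
qed

lemma gram_entry: fixes C :: "real^'n^'n" shows "(transpose C ** diag_mat z ** C) $ a $ b = (\<Sum>c\<in>UNIV. C $ c $ a * z c * C $ c $ b)"
proof -
  have e: "(transpose C ** diag_mat z) $ a $ c = C $ c $ a * z c" for c
  proof -
    have "(transpose C ** diag_mat z) $ a $ c = (\<Sum>k\<in>UNIV. C $ k $ a * (if k = c then z k else 0))"
      by (simp add: matrix_matrix_mult_def transpose_def)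
    also have "\<dots> = (\<Sum>k\<in>UNIV. if k = c then C $ c $ a * z c else 0)" by (rule sum.cong) auto
    finally show ?thesis by simp
  qed
  have mm: "(X ** Y) $ a $ b = (\<Sum>c\<in>UNIV. X $ a $ c * Y $ c $ b)" for X Y :: "real^'n^'n" and a b
    by (simp add: matrix_matrix_mult_def)
  show ?thesis unfolding mm[of "transpose C ** diag_mat z" C] e by (simp add: mult_ac)
qed

lemma delta_sums:
  fixes A :: "real^'n^'n"
  shows "(\<Sum>c\<in>UNIV. ((if c = a then 1 else 0) + t * A $ c $ a) * z c * ((if c = b then 1 else 0) + t * A $ c $ b))
       = (if a = b then z a else 0) + t * (z a * A $ a $ b + A $ b $ a * z b) + t\<^sup>2 * (\<Sum>c\<in>UNIV. A $ c $ a * z c * A $ c $ b)"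
proof -
  have split: "((if c = a then 1 else 0) + t * A $ c $ a) * z c * ((if c = b then 1 else 0) + t * A $ c $ b)
     = (if c = a then (if a = b then z a else 0) else 0) + (if c = a then t * (z a * A $ a $ b) else 0)
       + (if c = b then t * (A $ b $ a * z b) else 0) + t\<^sup>2 * (A $ c $ a * z c * A $ c $ b)" for c
    by (simp add: algebra_simps power2_eq_square)
  show ?thesis unfolding split sum.distrib by (simp add: sum_distrib_left algebra_simps)
qed

definition Amat :: "('n \<Rightarrow> real) \<Rightarrow> real^'n^'n \<Rightarrow> real^'n^'n" where
  "Amat z Wt = (\<chi> a b. if 0 < z a then (if 0 < z b then Wt $ a $ b / (2 * z a) else Wt $ a $ b / z a) else 0)"

lemma REC:
  fixes P :: "real^'n^'n"
  assumes P: "orthogonal_matrix P" and SC: "SC z m" and WL: "W \<in> Lset P (Zneg m)"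
  shows "\<exists>K\<in>sym_mats. \<forall>t>0. second_diff_quot (indicator_fun psd_cone) (P ** diag_mat z ** transpose P)
            (P ** diag_mat m ** transpose P) t (W + t *\<^sub>R K) \<le> ereal (Qf P (ccf z m) W)"
proof -
  define Wt where "Wt = tlm P W"
  define A where "A = Amat z Wt"
  define Kt where "Kt = transpose A ** diag_mat z ** A"
  define K where "K = P ** Kt ** transpose P"
  have z: "\<And>i. 0 \<le> z i" using SC_z_nonneg[OF SC] by blast
  have Wsym: "W \<in> sym_mats" using WL Lset_sub by blast
  have Wts: "Wt $ a $ b = Wt $ b $ a" for a b unfolding Wt_def by (rule tl_sym[OF Wsym])
  have WL0: "m a < 0 \<Longrightarrow> m b < 0 \<Longrightarrow> Wt $ a $ b = 0" for a b
    using WL unfolding Lset_def Zneg_def Wt_def by blast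
  have amid: "z a * A $ a $ b + A $ b $ a * z b = Wt $ a $ b" for a b
  proof -
    consider "0 < z a" "0 < z b" | "0 < z a" "\<not> 0 < z b" | "\<not> 0 < z a" "0 < z b" | "\<not> 0 < z a" "\<not> 0 < z b"
      by blast
    thus ?thesis
    proof cases
      case 1 thus ?thesis using Wts[of b a] by (simp add: A_def Amat_def field_simps)
    next
      case 2 thus ?thesis by (simp add: A_def Amat_def field_simps)
    next
      case 3 thus ?thesis using Wts[of b a] by (simp add: A_def Amat_def field_simps)
    next
      case 4
      hence "z a = 0" "z b = 0" using z[of a] z[of b] by auto
      hence "m a < 0" "m b < 0" using SC unfolding SC_def by (metis less_irrefl)+
      thus ?thesis using 4 WL0 by (simp add: A_def Amat_def)
    qed
  qed
  define C where "C = (\<lambda>t::real. mat 1 + t *\<^sub>R A)"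
  have ident: "diag_mat z + t *\<^sub>R Wt + t\<^sup>2 *\<^sub>R Kt = transpose (C t) ** diag_mat z ** C t" for t
  proof -
    have "(transpose (C t) ** diag_mat z ** C t) $ a $ b = (diag_mat z + t *\<^sub>R Wt + t\<^sup>2 *\<^sub>R Kt) $ a $ b" for a b
    proof -
      have "(transpose (C t) ** diag_mat z ** C t) $ a $ b =
            (\<Sum>c\<in>UNIV. ((if c = a then 1 else 0) + t * A $ c $ a) * z c * ((if c = b then 1 else 0) + t * A $ c $ b))"
        unfolding gram_entry by (simp add: C_def mat_def)
      also have "\<dots> = (if a = b then z a else 0) + t * Wt $ a $ b + t\<^sup>2 * Kt $ a $ b"
        unfolding delta_sums amid Kt_def gram_entry ..
      finally show ?thesis by simp
    qed
    thus ?thesis by (simp add: vec_eq_iff)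
  qed
  have Ksym: "K \<in> sym_mats"
    unfolding sym_mats_def K_def Kt_def
    by (simp add: conj_transpose matrix_transpose_mul diag_transpose matrix_mul_assoc)
  have Kjj: "Kt $ j $ j = Sj P z W j" if "m j < 0" for j
  proof -
    have zj: "z j = 0" using SC_neg[OF SC that] .
    have "Kt $ j $ j = (\<Sum>c\<in>UNIV. A $ c $ j * z c * A $ c $ j)" unfolding Kt_def gram_entry ..
    also have "\<dots> = (\<Sum>c\<in>UNIV. wv z c * (Wt $ c $ j)\<^sup>2)"
      by (intro sum.cong refl) (simp add: A_def Amat_def wv_def zj power2_eq_square)
    finally show ?thesis unfolding Sj_def Wt_def .
  qed
  have "\<forall>t>0. second_diff_quot (indicator_fun psd_cone) (P ** diag_mat z ** transpose P)
            (P ** diag_mat m ** transpose P) t (W + t *\<^sub>R K) \<le> ereal (Qf P (ccf z m) W)"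
  proof (intro allI impI)
    fix t :: real assume t: "t > 0"
    have tl: "tlm P (P ** diag_mat z ** transpose P + t *\<^sub>R (W + t *\<^sub>R K)) = diag_mat z + t *\<^sub>R Wt + t\<^sup>2 *\<^sub>R Kt"
      by (simp add: tl_add tl_scale tl_conj[OF P] K_def Wt_def power2_eq_square algebra_simps)
    have "P ** diag_mat z ** transpose P + t *\<^sub>R (W + t *\<^sub>R K)
        = P ** (transpose (C t) ** diag_mat z ** C t) ** transpose P"
      using tl_back[OF P, of "P ** diag_mat z ** transpose P + t *\<^sub>R (W + t *\<^sub>R K)"] unfolding tl ident by simp
    also have "\<dots> = transpose (C t ** transpose P) ** diag_mat z ** (C t ** transpose P)"
      by (simp add: matrix_transpose_mul matrix_mul_assoc)
    finally have psd: "P ** diag_mat z ** transpose P + t *\<^sub>R (W + t *\<^sub>R K) \<in> psd_cone"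
      using gram_psd[OF z] by simp
    have "(P ** diag_mat m ** transpose P) \<bullet> (W + t *\<^sub>R K) = (\<Sum>j\<in>UNIV. m j * (Wt $ j $ j + t * Kt $ j $ j))"
      unfolding YU[OF P] by (simp add: tl_add tl_scale tl_conj[OF P] K_def Wt_def)
    also have "\<dots> = (\<Sum>j\<in>UNIV. t * (m j * Sj P z W j))"
    proof (rule sum.cong)
      fix j
      show "m j * (Wt $ j $ j + t * Kt $ j $ j) = t * (m j * Sj P z W j)"
      proof (cases "m j < 0")
        case True thus ?thesis using WL0[OF True True] Kjj[OF True] by simp
      next
        case False thus ?thesis using SC_zero[OF SC False] by simp
      qed
    qed simp
    also have "\<dots> = t * (\<Sum>j\<in>UNIV. m j * Sj P z W j)" by (simp add: sum_distrib_left)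
    finally have YUv: "(P ** diag_mat m ** transpose P) \<bullet> (W + t *\<^sub>R K) = t * (\<Sum>j\<in>UNIV. m j * Sj P z W j)" .
    have Qv: "Qf P (ccf z m) W = - 2 * (\<Sum>j\<in>UNIV. m j * Sj P z W j)"
      unfolding Qf_ccf by (simp add: sum_distrib_left mult.assoc)
    have "- 2 * ((P ** diag_mat m ** transpose P) \<bullet> (W + t *\<^sub>R K)) / t = Qf P (ccf z m) W"
      unfolding YUv Qv using t by simp
    thus "second_diff_quot (indicator_fun psd_cone) (P ** diag_mat z ** transpose P)
            (P ** diag_mat m ** transpose P) t (W + t *\<^sub>R K) \<le> ereal (Qf P (ccf z m) W)"
      using quot_eq[OF P z t] psd by simp
  qed
  thus ?thesis using Ksym by blast
qed

definition dfun :: "real^'n^'n \<Rightarrow> ('n \<Rightarrow> real) \<Rightarrow> ('n \<Rightarrow> real) \<Rightarrow> real^'n^'n \<Rightarrow> ereal" where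
  "dfun P z m W = (if W \<in> Lset P (Zneg m) then ereal (Qf P (ccf z m) W) else \<infinity>)"

lemma ccf_nonneg: "SC z m \<Longrightarrow> 0 \<le> ccf z m i j"
  unfolding ccf_def using SC_m_nonpos[of z m j] wv_nonneg[of z i]
  by (simp add: mult_nonpos_nonneg mult_le_0_iff)

lemma strict_point:
  fixes P :: "real^'n^'n"
  assumes P: "orthogonal_matrix P" and SC: "SC z m"
  shows "\<forall>W\<in>sym_mats. second_subderiv sym_mats (indicator_fun psd_cone) (P ** diag_mat z ** transpose P)
            (P ** diag_mat m ** transpose P) W = dfun P z m W"
    and "gen_twice_diff sym_mats (indicator_fun psd_cone) (P ** diag_mat z ** transpose P) (P ** diag_mat m ** transpose P)"
proof -
  have z: "\<And>i. 0 \<le> z i" using SC_z_nonneg[OF SC] by blast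
  have Zpsd: "P ** diag_mat z ** transpose P \<in> psd_cone" by (rule conj_psd[OF z])
  have ZV: "P ** diag_mat z ** transpose P \<in> sym_mats" using Zpsd unfolding psd_cone_def sym_mats_def by blast
  have YV: "P ** diag_mat m ** transpose P \<in> sym_mats"
    unfolding sym_mats_def by (simp add: conj_transpose diag_transpose)
  have gz: "\<bar>indicator_fun psd_cone (P ** diag_mat z ** transpose P)\<bar> \<noteq> \<infinity>"
    using Zpsd by (simp add: indicator_fun_def)
  have LB: "eventually (\<lambda>p. y < case_prod (second_diff_quot (indicator_fun psd_cone)
            (P ** diag_mat z ** transpose P) (P ** diag_mat m ** transpose P)) p)
         (at_right 0 \<times>\<^sub>F inf (nhds W) (principal sym_mats))"
    if W: "W \<in> sym_mats" and y: "y < dfun P z m W" for W y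
  proof (cases "W \<in> Lset P (Zneg m)")
    case True
    thus ?thesis using LB_in[OF P SC True] y by (simp add: dfun_def)
  next
    case False
    thus ?thesis using LB_out[OF P SC W False] y by (simp add: dfun_def)
  qed
  have RC: "\<exists>K\<in>sym_mats. \<forall>t>0. second_diff_quot (indicator_fun psd_cone) (P ** diag_mat z ** transpose P)
            (P ** diag_mat m ** transpose P) t (W + t *\<^sub>R K) \<le> dfun P z m W"
    if W: "W \<in> sym_mats" and d: "dfun P z m W \<noteq> \<infinity>" for W
  proof -
    have WL: "W \<in> Lset P (Zneg m)" using d by (simp add: dfun_def split: if_splits)
    show ?thesis using REC[OF P SC WL] WL by (simp add: dfun_def)
  qed
  note E = epi_abstract[OF subspace_sym ZV YV gz LB RC]
  show eq: "\<forall>W\<in>sym_mats. second_subderiv sym_mats (indicator_fun psd_cone) (P ** diag_mat z ** transpose P)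
            (P ** diag_mat m ** transpose P) W = dfun P z m W" by (rule E(1))
  have gq': "gen_quad_form sym_mats (second_subderiv sym_mats (indicator_fun psd_cone) (P ** diag_mat z ** transpose P)
            (P ** diag_mat m ** transpose P))"
    by (rule gq[OF ccf_nonneg[OF SC]]) (use eq in \<open>simp add: dfun_def\<close>)
  show "gen_twice_diff sym_mats (indicator_fun psd_cone) (P ** diag_mat z ** transpose P) (P ** diag_mat m ** transpose P)"
    unfolding gen_twice_diff_def using E(2) gq' by blast
qed

lemma tl_inj: assumes P: "orthogonal_matrix P" and e: "tlm P A = tlm P B" shows "A = B"
proof -
  have "P ** tlm P A ** transpose P = P ** tlm P B ** transpose P" using e by simp
  thus ?thesis unfolding tl_back[OF P] .
qed

definition zk :: "('n \<Rightarrow> real) \<Rightarrow> nat \<Rightarrow> 'n \<Rightarrow> real" where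
  "zk lam k i = max (lam i) 0 + (if lam i = 0 then inverse (real (Suc k)) else 0)"

definition cq :: "('n \<Rightarrow> real) \<Rightarrow> 'n \<Rightarrow> 'n \<Rightarrow> real" where
  "cq lam i j = (if 0 < lam i \<and> lam j < 0 then - lam j / lam i else 0)"

definition Zq :: "('n \<Rightarrow> real) \<Rightarrow> 'n \<Rightarrow> 'n \<Rightarrow> bool" where
  "Zq lam i j \<longleftrightarrow> lam j < 0 \<and> lam i \<le> 0"

definition ce :: "('n \<Rightarrow> real) \<Rightarrow> nat \<Rightarrow> 'n \<Rightarrow> 'n \<Rightarrow> real" where
  "ce lam k i j = (if lam i = 0 then - min (lam j) 0 * real (Suc k) else 0)"

lemma SC_zk: "SC (zk lam k) (\<lambda>i. min (lam i) 0)"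
  unfolding SC_def zk_def by (auto simp: max_def min_def)

lemma cq_nonneg: "0 \<le> cq lam i j" unfolding cq_def by (auto simp: divide_nonpos_pos)
lemma ce_nonneg: "0 \<le> ce lam k i j" unfolding ce_def by (auto simp: min_def mult_le_0_iff)

lemma coef_split: "Qf P (ccf (zk lam k) (\<lambda>i. min (lam i) 0)) W = 2 * (Qf P (cq lam) W + Qf P (ce lam k) W)"
proof -
  have c: "ccf (zk lam k) (\<lambda>i. min (lam i) 0) i j = 2 * (cq lam i j + ce lam k i j)" for i j
    unfolding ccf_def cq_def ce_def wv_def zk_def by (auto simp: min_def max_def field_simps)
  show ?thesis
    unfolding Qf_def c by (simp add: sum_distrib_left sum.distrib[symmetric] algebra_simps)
qed

lemma Lset_sub2: "Lset P (Zq lam) \<subseteq> Lset P (Zneg (\<lambda>i. min (lam i) 0))"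
  unfolding Lset_def Zq_def Zneg_def by (auto simp: min_less_iff_disj)

lemma aff_eq: "aff_crit_cone P lam = Lset P (Zq lam)"
  unfolding aff_crit_cone_def Lset_def Zq_def tlm_def by auto

lemma ce_zero_on: assumes W: "W \<in> Lset P (Zq lam)" shows "Qf P (ce lam k) W = 0"
proof -
  have z0: "ce lam k a b * (tlm P W $ a $ b)\<^sup>2 = 0" for a b
  proof (cases "lam a = 0 \<and> lam b < 0")
    case True thus ?thesis using W unfolding Lset_def Zq_def by auto
  next
    case False thus ?thesis unfolding ce_def by (auto simp: min_def)
  qed
  show ?thesis unfolding Qf_def by (intro sum.neutral ballI z0)
qed

lemma half_dfun:
  fixes P :: "real^'n^'n"
  shows "ereal (1/2) * dfun P (zk lam k) (\<lambda>i. min (lam i) 0) W =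
     (if W \<in> Lset P (Zneg (\<lambda>i. min (lam i) 0)) then ereal (Qf P (cq lam) W + Qf P (ce lam k) W) else \<infinity>)"
  unfolding dfun_def coef_split by simp

lemma epi_main:
  fixes P :: "real^'n^'n" and lam :: "'n \<Rightarrow> real"
  assumes P: "orthogonal_matrix P"
  defines "q \<equiv> (\<lambda>H. if H \<in> Lset P (Zq lam) then ereal (Qf P (cq lam) H) else \<infinity>)"
  shows "epi_conv_seq sym_mats (\<lambda>k w. ereal (1/2) * dfun P (zk lam k) (\<lambda>i. min (lam i) 0) w) q"
  unfolding epi_conv_seq_def
proof (intro ballI conjI allI impI)
  fix x :: "real^'n^'n" and xs
  assume x: "x \<in> sym_mats" and xs: "(\<forall>k. xs k \<in> sym_mats) \<and> xs \<longlonglongrightarrow> x"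
  let ?F = "\<lambda>k. ereal (1/2) * dfun P (zk lam k) (\<lambda>i. min (lam i) 0) (xs k)"
  have lowb: "ereal (Qf P (cq lam) (xs k) + Qf P (ce lam k) (xs k)) \<le> ?F k" for k
    unfolding half_dfun by simp
  have TS: "(\<lambda>k. tlm P (xs k) $ a $ b) \<longlonglongrightarrow> tlm P x $ a $ b" for a b
    using tl_continuous xs by blast
  show "q x \<le> liminf ?F"
  proof (cases "x \<in> Lset P (Zq lam)")
    case True
    show ?thesis unfolding le_Liminf_iff
    proof (intro allI impI)
      fix y assume "y < q x"
      hence y: "y < ereal (Qf P (cq lam) x)" using True by (simp add: q_def)
      have "(\<lambda>k. ereal (Qf P (cq lam) (xs k))) \<longlonglongrightarrow> ereal (Qf P (cq lam) x)"
        using Qf_cont[of xs x sequentially P "cq lam"] xs by simp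
      hence "eventually (\<lambda>k. y < ereal (Qf P (cq lam) (xs k))) sequentially"
        using y by (rule order_tendstoD(1))
      thus "eventually (\<lambda>k. y < ?F k) sequentially"
      proof (rule eventually_mono)
        fix k assume "y < ereal (Qf P (cq lam) (xs k))"
        moreover have "0 \<le> Qf P (ce lam k) (xs k)" by (rule Qf_nonneg) (rule ce_nonneg)
        hence "Qf P (cq lam) (xs k) \<le> Qf P (cq lam) (xs k) + Qf P (ce lam k) (xs k)" by simp
        ultimately show "y < ?F k" using lowb[of k] by (meson ereal_less_eq(3) less_le_trans)
      qed
    qed
  next
    case False
    then obtain i j where ij: "lam j < 0" "lam i \<le> 0" and xij: "tlm P x $ i $ j \<noteq> 0"
      using x unfolding Lset_def Zq_def by blast
    have qx: "q x = \<infinity>" using False by (simp add: q_def)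
    show ?thesis unfolding qx le_Liminf_iff
    proof (intro allI impI)
      fix y :: ereal assume "y < \<infinity>"
      then obtain B where yB: "y \<le> ereal B" by (cases y) auto
      define om where "om = (tlm P x $ i $ j)\<^sup>2"
      have om: "om > 0" using xij by (simp add: om_def)
      have ev1: "eventually (\<lambda>k. om / 2 < (tlm P (xs k) $ i $ j)\<^sup>2) sequentially"
      proof -
        have "(\<lambda>k. (tlm P (xs k) $ i $ j)\<^sup>2) \<longlonglongrightarrow> om" unfolding om_def by (intro tendsto_intros TS)
        thus ?thesis using om by (intro order_tendstoD(1)) auto
      qed
      show "eventually (\<lambda>k. y < ?F k) sequentially"
      proof (cases "lam i < 0")
        case True
        have "eventually (\<lambda>k. xs k \<notin> Lset P (Zneg (\<lambda>i. min (lam i) 0))) sequentially"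
          using ev1
        proof (rule eventually_mono)
          fix k assume "om / 2 < (tlm P (xs k) $ i $ j)\<^sup>2"
          hence "tlm P (xs k) $ i $ j \<noteq> 0" using om by auto
          thus "xs k \<notin> Lset P (Zneg (\<lambda>i. min (lam i) 0))"
            using True ij unfolding Lset_def Zneg_def by (auto simp: min_less_iff_disj)
        qed
        thus ?thesis
          by (rule eventually_mono) (use yB in \<open>auto simp: half_dfun\<close>)
      next
        case False
        hence li: "lam i = 0" using ij by simp
        obtain N :: nat where N: "(\<bar>B\<bar> + 1) / (- lam j * (om / 2)) < real N"
          using reals_Archimedean2 by blast
        have ev2: "eventually (\<lambda>k. N \<le> k) sequentially" by (rule eventually_ge_at_top)
        from ev1 ev2 show ?thesis
        proof (rule eventually_elim2)
          fix k assume k1: "om / 2 < (tlm P (xs k) $ i $ j)\<^sup>2" and k2: "N \<le> k"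
          have cpos: "0 < - lam j * (om / 2)" using ij om by (simp add: mult_neg_pos)
          have "ce lam k i j * (tlm P (xs k) $ i $ j)\<^sup>2 \<le> Qf P (ce lam k) (xs k)"
          proof -
            have "ce lam k i j * (tlm P (xs k) $ i $ j)\<^sup>2 \<le> (\<Sum>b\<in>UNIV. ce lam k i b * (tlm P (xs k) $ i $ b)\<^sup>2)"
              by (rule member_le_sum) (auto intro: mult_nonneg_nonneg ce_nonneg)
            also have "\<dots> \<le> Qf P (ce lam k) (xs k)" unfolding Qf_def
              by (rule member_le_sum[of i UNIV "\<lambda>a. \<Sum>b\<in>UNIV. ce lam k a b * (tlm P (xs k) $ a $ b)\<^sup>2"])
                 (auto intro!: sum_nonneg mult_nonneg_nonneg ce_nonneg)
            finally show ?thesis .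
          qed
          moreover have "ce lam k i j = - lam j * real (Suc k)" using li ij by (simp add: ce_def min_def)
          ultimately have c1: "- lam j * real (Suc k) * (tlm P (xs k) $ i $ j)\<^sup>2 \<le> Qf P (ce lam k) (xs k)" by simp
          have "\<bar>B\<bar> + 1 < - lam j * real (Suc k) * (om / 2)"
          proof -
            have "(\<bar>B\<bar> + 1) / (- lam j * (om / 2)) < real (Suc k)" using N k2 by simp
            thus ?thesis using cpos by (simp add: field_simps)
          qed
          moreover have "- lam j * real (Suc k) * (om / 2) \<le> - lam j * real (Suc k) * (tlm P (xs k) $ i $ j)\<^sup>2"
            using k1 ij by (intro mult_left_mono) (auto simp: mult_le_0_iff)
          moreover have "0 \<le> Qf P (cq lam) (xs k)" by (rule Qf_nonneg) (rule cq_nonneg)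
          ultimately have "B < Qf P (cq lam) (xs k) + Qf P (ce lam k) (xs k)" using c1 by linarith
          hence "ereal B < ereal (Qf P (cq lam) (xs k) + Qf P (ce lam k) (xs k))" by simp
          thus "y < ?F k" using lowb[of k] yB by (meson le_less_trans less_le_trans)
        qed
      qed
    qed
  qed
next
  fix x :: "real^'n^'n" assume x: "x \<in> sym_mats"
  show "\<exists>xs. (\<forall>k. xs k \<in> sym_mats) \<and> xs \<longlonglongrightarrow> x \<and>
          limsup (\<lambda>k. ereal (1/2) * dfun P (zk lam k) (\<lambda>i. min (lam i) 0) (xs k)) \<le> q x"
  proof (intro exI[of _ "\<lambda>k::nat. x"] conjI allI)
    show "x \<in> sym_mats" by (rule x)
    show "(\<lambda>k. x) \<longlonglongrightarrow> x" by simp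
    show "limsup (\<lambda>k. ereal (1/2) * dfun P (zk lam k) (\<lambda>i. min (lam i) 0) x) \<le> q x"
    proof (cases "x \<in> Lset P (Zq lam)")
      case True
      have "ereal (1/2) * dfun P (zk lam k) (\<lambda>i. min (lam i) 0) x = q x" for k
        using True Lset_sub2[of P lam] ce_zero_on[OF True] unfolding half_dfun q_def by auto
      thus ?thesis by (intro Limsup_bounded always_eventually) simp
    next
      case False thus ?thesis by (simp add: q_def)
    qed
  qed
qed

lemma sum_filter_UNIV:
  fixes g :: "'n::finite \<Rightarrow> real"
  shows "(\<Sum>i\<in>{i. Q i}. g i) = (\<Sum>i\<in>UNIV. if Q i then g i else 0)"
  using sum.inter_filter[of "UNIV::'n set" g Q] by simp

lemma epi_conv_seq_cong:
  assumes eq: "\<And>k w. w \<in> V \<Longrightarrow> F k w = G k w" and E: "epi_conv_seq V G f"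
  shows "epi_conv_seq V F f"
  unfolding epi_conv_seq_def
proof (intro ballI conjI allI impI)
  fix x xs assume x: "x \<in> V" and xs: "(\<forall>k. xs k \<in> V) \<and> xs \<longlonglongrightarrow> x"
  have "(\<lambda>k. F k (xs k)) = (\<lambda>k. G k (xs k))" using xs eq by auto
  thus "f x \<le> liminf (\<lambda>k. F k (xs k))" using E x xs unfolding epi_conv_seq_def by auto
next
  fix x assume x: "x \<in> V"
  then obtain xs where xs: "(\<forall>k. xs k \<in> V) \<and> xs \<longlonglongrightarrow> x \<and> limsup (\<lambda>k. G k (xs k)) \<le> f x"
    using E unfolding epi_conv_seq_def by blast
  have "(\<lambda>k. F k (xs k)) = (\<lambda>k. G k (xs k))" using xs eq by auto
  thus "\<exists>xs. (\<forall>k. xs k \<in> V) \<and> xs \<longlonglongrightarrow> x \<and> limsup (\<lambda>k. F k (xs k)) \<le> f x" using xs by auto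
qed

theorem proposition3p2:
  fixes f :: "'a::euclidean_space \<Rightarrow> real"
    and G :: "'a \<Rightarrow> real^'n^'n"
    and xb :: 'a and Yb P :: "real^'n^'n" and lam :: "'n \<Rightarrow> real"
  assumes "C2 f" and "C2 G" and "\<forall>x. G x \<in> sym_mats"
    and "stationary f G xb" and "Yb \<in> multipliers f G xb"
    and "orthogonal_matrix P"
    and "G xb + Yb = P ** diag_mat lam ** transpose P"
  shows "\<exists>q \<in> quad_bundle sym_mats (indicator_fun psd_cone) (G xb) Yb.
     \<forall>H \<in> sym_mats.
       q H = ereal (- (1/2) * sigma_term (G xb) Yb H) + indicator_fun (aff_crit_cone P lam) H \<and>
       q H = ereal (\<Sum>i\<in>{i. lam i > 0}. \<Sum>j\<in>{j. lam j < 0}.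
                      (- lam j / lam i) * ((transpose P ** H ** P) $ i $ j)\<^sup>2)
             + indicator_fun (aff_crit_cone P lam) H"
proof -
  have P: "orthogonal_matrix P" by (rule assms(6))
  have M: "G xb \<in> psd_cone" "Yb \<in> nsd_cone" "G xb \<bullet> Yb = 0"
    using assms(5) unfolding multipliers_def by auto
  note D = decomp[OF P M assms(7)]
  have Geq: "G xb = P ** diag_mat (\<lambda>i. max (lam i) 0) ** transpose P"
    using tl_back[OF P, of "G xb"] D(1) by simp
  have Yeq: "Yb = P ** diag_mat (\<lambda>i. min (lam i) 0) ** transpose P"
    using tl_back[OF P, of Yb] D(2) by simp
  define q where "q = (\<lambda>H. if H \<in> Lset P (Zq lam) then ereal (Qf P (cq lam) H) else \<infinity>)"
  define zs where "zs = (\<lambda>k. P ** diag_mat (zk lam k) ** transpose P)"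
  define E where "E = P ** diag_mat (\<lambda>i. if lam i = 0 then 1 else 0) ** transpose P"
  have zsE: "zs k = G xb + inverse (real (Suc k)) *\<^sub>R E" for k
  proof (rule tl_inj[OF P])
    have "diag_mat (zk lam k) = diag_mat (\<lambda>i. max (lam i) 0) + inverse (real (Suc k)) *\<^sub>R diag_mat (\<lambda>i. if lam i = 0 then 1 else 0)"
      by (simp add: vec_eq_iff zk_def)
    thus "tlm P (zs k) = tlm P (G xb + inverse (real (Suc k)) *\<^sub>R E)"
      unfolding zs_def E_def Geq by (simp add: tl_add tl_scale tl_conj[OF P])
  qed
  have zlim: "zs \<longlonglongrightarrow> G xb"
  proof -
    have "(\<lambda>k. G xb + inverse (real (Suc k)) *\<^sub>R E) \<longlonglongrightarrow> G xb + 0 *\<^sub>R E"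
      by (intro tendsto_intros LIMSEQ_inverse_real_of_nat)
    thus ?thesis unfolding zsE by simp
  qed
  have GT: "gen_twice_diff sym_mats (indicator_fun psd_cone) (zs k) Yb" for k
    unfolding zs_def Yeq by (rule strict_point(2)[OF P SC_zk])
  have EC: "epi_conv_seq sym_mats (\<lambda>k w. ereal (1/2) * second_subderiv sym_mats (indicator_fun psd_cone) (zs k) Yb w) q"
    unfolding q_def
  proof (rule epi_conv_seq_cong[OF _ epi_main[OF P]])
    fix k and w :: "real^'n^'n" assume w: "w \<in> sym_mats"
    show "ereal (1/2) * second_subderiv sym_mats (indicator_fun psd_cone) (zs k) Yb w
        = ereal (1/2) * dfun P (zk lam k) (\<lambda>i. min (lam i) 0) w"
      using strict_point(1)[OF P SC_zk, of lam k] w unfolding zs_def Yeq by simp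
  qed
  have GQ: "gen_quad_form sym_mats q" by (rule gq[OF cq_nonneg]) (simp add: q_def)
  have QB: "q \<in> quad_bundle sym_mats (indicator_fun psd_cone) (G xb) Yb"
    unfolding quad_bundle_def using GQ zlim GT EC
    by (intro CollectI conjI exI[of _ zs] exI[of _ "\<lambda>k::nat. Yb"]) auto
  have vals: "q H = ereal (- (1/2) * sigma_term (G xb) Yb H) + indicator_fun (aff_crit_cone P lam) H \<and>
       q H = ereal (\<Sum>i\<in>{i. lam i > 0}. \<Sum>j\<in>{j. lam j < 0}.
                      (- lam j / lam i) * ((transpose P ** H ** P) $ i $ j)\<^sup>2)
             + indicator_fun (aff_crit_cone P lam) H" if H: "H \<in> sym_mats" for H
  proof -
    have s1: "- (1/2) * sigma_term (G xb) Yb H = Qf P (cq lam) H"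
      unfolding Geq Yeq sigma_val[OF P H] Qf_def cq_def ..
    have s2: "(\<Sum>i\<in>{i. lam i > 0}. \<Sum>j\<in>{j. lam j < 0}. (- lam j / lam i) * ((transpose P ** H ** P) $ i $ j)\<^sup>2)
        = Qf P (cq lam) H"
      unfolding sum_filter_UNIV Qf_def cq_def tlm_def
      by (intro sum.cong refl) (auto intro!: sum.cong)
    have ind: "indicator_fun (aff_crit_cone P lam) H = (if H \<in> Lset P (Zq lam) then 0 else \<infinity>)"
      unfolding aff_eq indicator_fun_def ..
    show ?thesis unfolding s1 s2 ind q_def by simp
  qed
  show ?thesis using QB vals by blast
qed

end
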